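(* Let $\rho$ be an odd prime with $\rho\equiv\pm5\pmod{12}$ and $\mathrm{ord}_\rho(3)=\rho-1$, let $m=\rho-1$, let $\alpha$ be a primitive element of $\mathrm{GF}(3^m)$, $\beta=\alpha^{(3^m-1)/(4\rho)}$ and $\theta=\beta^{-1}$. Let $\mathcal{C}(\rho)$ be the ternary negacyclic code of length $2\rho$ whose check polynomial is the minimal polynomial of $\beta$ over $\mathrm{GF}(3)$; equivalently $$\mathcal{C}(\rho)=\left\{\left(\mathrm{Tr}_{3^m/3}(a\theta^i)\right)_{i=0}^{2\rho-1}: a\in\mathrm{GF}(3^m)\right\}.$$ Let $\overline{\mathcal{C}}(\rho)=\{(\mathrm{Tr}_{3^m/3^2}(a\theta^{2i}))_{i=0}^{\rho-1}: a\in\mathrm{GF}(3^m)\}$ (a linear code over $\mathrm{GF}(9)$). Then $\mathcal{C}(\rho)$ has parameters $[2\rho,\rho-1,d]$ where $d\ge d(\overline{\mathcal{C}}(\rho))\ge\sqrt{\rho}+1$.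
   Context: A ternary negacyclic code of length $n$ is an ideal of $\mathrm{GF}(3)[x]/(x^n+1)$ (codewords $(c_0,\dots,c_{n-1})\leftrightarrow\sum c_ix^i$); its check polynomial is $(x^n+1)/g(x)$, where $g$ is its monic generator polynomial. $\mathrm{Tr}_{3^m/3^k}$ denotes the trace from $\mathrm{GF}(3^m)$ to $\mathrm{GF}(3^k)$. $d(\cdot)$ is the minimum Hamming distance; $[n,k,d]$ denotes length, dimension, minimum distance. *)

theory Defs
  imports "HOL-Number_Theory.Number_Theory"
begin

text \<open>Relative trace from GF(q^n) down to GF(q), written out explicitly:
  Tr(x) = x + x^q + ... + x^(q^(n-1)).  Used inside a field of order q^n
  (or a power of it, for the Frobenius sum).\<close>
definition ftrace :: "nat \<Rightarrow> nat \<Rightarrow> 'a::field \<Rightarrow> 'a" where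
  "ftrace q n x = (\<Sum>j<n. x ^ (q ^ j))"

definition primitive_element :: "'a::field \<Rightarrow> bool" where
  "primitive_element a \<longleftrightarrow> a \<noteq> 0 \<and> (\<forall>x. x \<noteq> 0 \<longrightarrow> (\<exists>k::nat. x = a ^ k))"

definition hamming_dist :: "'a list \<Rightarrow> 'a list \<Rightarrow> nat" where
  "hamming_dist x y = card {i. i < length x \<and> x ! i \<noteq> y ! i}"

definition min_distance :: "'a list set \<Rightarrow> nat" where
  "min_distance C = Min {hamming_dist c c' | c c'. c \<in> C \<and> c' \<in> C \<and> c \<noteq> c'}"

end

theory Submission
  imports Defs "HOL-Computational_Algebra.Polynomial"
begin

lemma card_times_zero:
  fixes x :: "'a::{field,finite}"
  shows "of_nat (card (UNIV::'a set)) * x = 0"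
proof -
  have "(\<Sum>y\<in>UNIV. x + y) = (\<Sum>y\<in>UNIV. (y::'a))"
    by (rule sum.reindex_bij_betw) (auto simp: bij_betw_def inj_on_def image_iff intro: exI[of _ "_ - x"])
  then show ?thesis by (simp add: sum.distrib)
qed

lemma three_eq_zero:
  fixes dummy :: "'a::{field,finite}"
  assumes "card (UNIV :: 'a set) = 3 ^ m" and "m > 0"
  shows "(3::'a) = 0"
proof -
  have "(of_nat (3^m) :: 'a) = 0" using card_times_zero[of "1::'a"] assms by simp
  then have "(3::'a)^m = 0" by simp
  then show ?thesis by simp
qed

lemma pow_card_minus_one:
  fixes x :: "'a::{field,finite}"
  assumes "x \<noteq> 0"
  shows "x ^ (card (UNIV::'a set) - 1) = 1"
proof -
  let ?S = "UNIV - {0::'a}"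
  have fin: "finite ?S" by simp
  have "(\<Prod>y\<in>?S. x * y) = (\<Prod>y\<in>?S. y)"
  proof (rule prod.reindex_bij_betw)
    show "bij_betw ((*) x) ?S ?S"
      unfolding bij_betw_def inj_on_def
    proof (intro conjI ballI impI equalityI subsetI)
      fix z assume "z \<in> ?S"
      then show "z \<in> (*) x ` ?S" using assms by (auto simp: image_iff intro!: bexI[of _ "z / x"])
    qed (use assms in auto)
  qed
  moreover have "(\<Prod>y\<in>?S. x * y) = x ^ card ?S * (\<Prod>y\<in>?S. y)"
    by (simp add: prod.distrib)
  moreover have "(\<Prod>y\<in>?S. y) \<noteq> 0" by (simp add: prod_zero_iff)
  moreover have "card ?S = card (UNIV::'a set) - 1" by (simp add: card_Diff_subset)
  ultimately show ?thesis by simp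
qed

lemma pow_card:
  fixes x :: "'a::{field,finite}"
  shows "x ^ card (UNIV::'a set) = x"
proof (cases "x = 0")
  case True then show ?thesis by (simp add: finite_UNIV_card_ge_0 power_0_left)
next
  case False
  have "card (UNIV::'a set) > 0" by (simp add: finite_UNIV_card_ge_0)
  then have "x ^ card (UNIV::'a set) = x * x ^ (card (UNIV::'a set) - 1)"
    by (metis Suc_diff_1 power_Suc)
  with pow_card_minus_one[OF False] show ?thesis by simp
qed

lemma frob3:
  fixes x y :: "'a::field"
  assumes "(3::'a) = 0"
  shows "(x + y) ^ 3 = x ^ 3 + y ^ 3"
proof -
  have "(x + y) ^ 3 = x ^ 3 + 3 * (x^2*y + x*y^2) + y ^ 3" by (simp add: algebra_simps power2_eq_square power3_eq_cube)
  with assms show ?thesis by simp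
qed

lemma frob3_pow:
  fixes x y :: "'a::field"
  assumes "(3::'a) = 0"
  shows "(x + y) ^ (3^j) = x ^ (3^j) + y ^ (3^j)"
proof (induction j)
  case 0 then show ?case by simp
next
  case (Suc j)
  have "(x + y) ^ (3^Suc j) = ((x+y)^(3^j))^3" by (simp add: power_mult[symmetric] mult.commute)
  also have "\<dots> = (x^(3^j))^3 + (y^(3^j))^3" using Suc frob3[OF assms] by simp
  also have "\<dots> = x ^ (3^Suc j) + y ^ (3^Suc j)" by (simp add: power_mult[symmetric] mult.commute)
  finally show ?case .
qed

lemma frob3_sum:
  fixes f :: "'b \<Rightarrow> 'a::field"
  assumes "(3::'a) = 0" and "finite A"
  shows "(\<Sum>i\<in>A. f i) ^ (3^j) = (\<Sum>i\<in>A. f i ^ (3^j))"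
  using assms(2) by (induction A rule: finite_induct) (simp_all add: frob3_pow[OF assms(1)])

lemma odd_pow3: "odd ((3::nat)^j)" by simp

lemma frob3_neg:
  fixes x :: "'a::field"
  shows "(- x) ^ (3^j) = - (x ^ (3^j))"
  by (simp add: power_minus_odd)

lemma frob3_diff:
  fixes x y :: "'a::field"
  assumes "(3::'a) = 0"
  shows "(x - y) ^ (3^j) = x ^ (3^j) - y ^ (3^j)"
  using frob3_pow[OF assms, of x "-y" j] frob3_neg[of y j] by simp

locale rho_setup =
  fixes \<rho> :: nat
  assumes rprime: "prime \<rho>" and rodd: "odd \<rho>" and ord3: "ord \<rho> 3 = \<rho> - 1" and rne3: "\<rho> \<noteq> 3"
begin

definition "M = \<rho> - 1"
definition "h = M div 2"

lemma rho_ge5: "\<rho> \<ge> 5"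
proof -
  have "\<rho> \<ge> 2" using rprime prime_ge_2_nat by blast
  moreover have "\<rho> \<noteq> 2" "\<rho> \<noteq> 4" using rodd by auto
  ultimately show ?thesis using rne3 by linarith
qed

lemma M_even: "even M" using rodd rho_ge5 by (simp add: M_def)
lemma M_ge4: "M \<ge> 4" using rho_ge5 by (simp add: M_def)
lemma M_h: "M = 2 * h" using M_even by (simp add: h_def)
lemma h_pos: "h > 0" using M_ge4 M_h by simp
lemma h_less: "h < M" using M_h h_pos by simp
lemma rho_M: "\<rho> = M + 1" using rho_ge5 by (simp add: M_def)

lemma coprime3: "coprime \<rho> 3"
proof -
  have "\<not> \<rho> dvd 3"
  proof
    assume "\<rho> dvd 3"
    then have "\<rho> \<le> 3" by (simp add: dvd_imp_le)
    with rho_ge5 show False by simp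
  qed
  then show ?thesis using rprime by (simp add: prime_imp_coprime)
qed

lemma ordM: "ord \<rho> 3 = M" using ord3 by (simp add: M_def)

lemma pow3_M: "3 ^ M mod \<rho> = 1"
proof -
  have "[3 ^ M = 1] (mod \<rho>)" using ord[of 3 \<rho>] ordM by simp
  then show ?thesis using rho_ge5 by (simp add: cong_def)
qed

lemma pow3_cong_iff: "[3^d = 3^e] (mod \<rho>) \<longleftrightarrow> [d = e] (mod M)"
  using order_divides_expdiff[OF coprime3] ordM by simp

lemma pow3_mod_exp: "3 ^ e mod \<rho> = 3 ^ (e mod M) mod \<rho>"
  using pow3_cong_iff[of e "e mod M"] by (simp add: cong_def)

lemma pow3_nz: "3 ^ e mod \<rho> \<noteq> 0"
proof
  assume "3 ^ e mod \<rho> = 0"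
  then have "\<rho> dvd 3 ^ e" by auto
  then have "\<rho> dvd 3" using rprime prime_dvd_power by blast
  then have "\<rho> \<le> 3" by (rule dvd_imp_le) simp
  then show False using rho_ge5 by simp
qed

lemma pow3_inj: "inj_on (\<lambda>e. 3 ^ e mod \<rho>) {..<M}"
proof (rule inj_onI)
  fix d e assume "d \<in> {..<M}" "e \<in> {..<M}" "3 ^ d mod \<rho> = 3 ^ e mod \<rho>"
  then have "[d = e] (mod M)" using pow3_cong_iff by (simp add: cong_def)
  with \<open>d \<in> {..<M}\<close> \<open>e \<in> {..<M}\<close> show "d = e" by (simp add: cong_def)
qed

lemma pow3_bij: "bij_betw (\<lambda>e. 3 ^ e mod \<rho>) {..<M} {1..<\<rho>}"
proof -
  have sub: "(\<lambda>e. 3 ^ e mod \<rho>) ` {..<M} \<subseteq> {1..<\<rho>}"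
  proof
    fix y assume "y \<in> (\<lambda>e. 3 ^ e mod \<rho>) ` {..<M}"
    then obtain e where "y = 3 ^ e mod \<rho>" by blast
    moreover have "3 ^ e mod \<rho> < \<rho>" using rho_ge5 by simp
    ultimately show "y \<in> {1..<\<rho>}" using pow3_nz[of e] by simp
  qed
  have "card ((\<lambda>e. 3 ^ e mod \<rho>) ` {..<M}) = M" using pow3_inj by (simp add: card_image)
  also have "\<dots> = card {1..<\<rho>}" by (simp add: M_def)
  finally have "(\<lambda>e. 3 ^ e mod \<rho>) ` {..<M} = {1..<\<rho>}" using sub
    by (simp add: card_subset_eq)
  then show ?thesis using pow3_inj by (simp add: bij_betw_def)
qed

lemma pow3_h: "3 ^ h mod \<rho> = \<rho> - 1"
proof -
  define x where "x = 3 ^ h mod \<rho>"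
  have x1: "x \<ge> 1" "x < \<rho>" using pow3_nz[of h] rho_ge5 by (auto simp: x_def)
  have "(3::nat) ^ M = 3^h * 3^h" unfolding M_h by (simp add: mult_2 power_add)
  then have "x * x mod \<rho> = 3 ^ M mod \<rho>" unfolding x_def
    by (simp only: mod_mult_eq)
  then have "x * x mod \<rho> = 1" using pow3_M by simp
  then have "x * x mod \<rho> = 1 mod \<rho>" using rho_ge5 by simp
  moreover have "1 \<le> x * x" using x1 by simp
  ultimately have d1: "\<rho> dvd x * x - 1" using mod_eq_dvd_iff_nat by blast
  obtain y where y: "x = Suc y" using x1 by (cases x) auto
  have "x * x - 1 = y * (x + 1)" using y by simp
  with d1 have "\<rho> dvd y * (x + 1)" by simp
  then have "\<rho> dvd y \<or> \<rho> dvd (x + 1)" using prime_dvd_mult_iff[OF rprime, of y "x+1"] by blast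
  moreover have "y \<noteq> 0"
  proof
    assume "y = 0"
    then have "[3 ^ h = 1] (mod \<rho>)" using rho_ge5 y by (simp add: x_def cong_def)
    then show False using ord_minimal[of h \<rho> 3] h_pos h_less ordM by simp
  qed
  moreover have "\<not> \<rho> dvd y"
  proof
    assume "\<rho> dvd y"
    then have "\<rho> \<le> y" using \<open>y \<noteq> 0\<close> by (simp add: dvd_imp_le)
    then show False using x1 y by simp
  qed
  ultimately have "\<rho> dvd x + 1" by blast
  then have "\<rho> \<le> x + 1" by (simp add: dvd_imp_le)
  then have "x + 1 = \<rho>" using x1 by simp
  then show ?thesis unfolding x_def by simp
qed

lemma pow3_eq_minus1: "e < M \<Longrightarrow> 3 ^ e mod \<rho> = \<rho> - 1 \<Longrightarrow> e = h"
  using pow3_inj h_less pow3_h by (auto simp: inj_on_def)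

end

lemma inj_self_bij:
  assumes "finite A" "inj_on g A" "g ` A \<subseteq> A"
  shows "bij_betw g A A"
proof -
  have "card (g ` A) = card A" using assms by (simp add: card_image)
  then have "g ` A = A" using assms by (simp add: card_subset_eq)
  then show ?thesis using assms by (simp add: bij_betw_def)
qed

lemma sum_periodic_shift:
  fixes f :: "int \<Rightarrow> 'b::comm_monoid_add"
  assumes per: "\<And>x. f (x mod int M) = f x" and M: "M > 0"
  shows "(\<Sum>e<M. f (c + int e)) = (\<Sum>e<M. f (int e))"
proof -
  define g where "g e = nat ((c + int e) mod int M)" for e
  have "bij_betw g {..<M} {..<M}"
  proof (rule inj_self_bij)
    show "inj_on g {..<M}"
    proof (rule inj_onI)
      fix x y assume xy: "x \<in> {..<M}" "y \<in> {..<M}" "g x = g y"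
      then have "(c + int x) mod int M = (c + int y) mod int M" using M
        unfolding g_def by (simp add: eq_nat_nat_iff)
      then have "int M dvd (c + int x) - (c + int y)" by (simp only: mod_eq_dvd_iff)
      then have "int M dvd int x - int y" by simp
      then have "int x mod int M = int y mod int M" by (simp only: mod_eq_dvd_iff)
      then show "x = y" using xy by simp
    qed
    show "g ` {..<M} \<subseteq> {..<M}" using M by (auto simp: g_def nat_less_iff)
  qed simp
  then have "(\<Sum>e<M. f (int (g e))) = (\<Sum>e<M. f (int e))" by (rule sum.reindex_bij_betw)
  moreover have "f (int (g e)) = f (c + int e)" for e using M per[of "c + int e"] by (simp add: g_def)
  ultimately show ?thesis by simp
qed

lemma sum_periodic_refl:
  fixes f :: "int \<Rightarrow> 'b::comm_monoid_add"
  assumes per: "\<And>x. f (x mod int M) = f x" and M: "M > 0"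
  shows "(\<Sum>e<M. f (c - int e)) = (\<Sum>e<M. f (int e))"
proof -
  define g where "g e = nat ((c - int e) mod int M)" for e
  have "bij_betw g {..<M} {..<M}"
  proof (rule inj_self_bij)
    show "inj_on g {..<M}"
    proof (rule inj_onI)
      fix x y assume xy: "x \<in> {..<M}" "y \<in> {..<M}" "g x = g y"
      then have "(c - int x) mod int M = (c - int y) mod int M" using M
        unfolding g_def by (simp add: eq_nat_nat_iff)
      then have "int M dvd (c - int x) - (c - int y)" by (simp only: mod_eq_dvd_iff)
      then have "int M dvd int y - int x" by simp
      then have "int y mod int M = int x mod int M" by (simp only: mod_eq_dvd_iff)
      then show "x = y" using xy by simp
    qed
    show "g ` {..<M} \<subseteq> {..<M}" using M by (auto simp: g_def nat_less_iff)
  qed simp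
  then have "(\<Sum>e<M. f (int (g e))) = (\<Sum>e<M. f (int e))" by (rule sum.reindex_bij_betw)
  moreover have "f (int (g e)) = f (c - int e)" for e using M per[of "c - int e"] by (simp add: g_def)
  ultimately show ?thesis by simp
qed

definition sg :: "int \<Rightarrow> 'a::field" where "sg e = (if even e then 1 else -1)"

lemma sg_add: "sg (x + y) = sg x * sg y" by (auto simp: sg_def)
lemma sg_diff: "sg (x - y) = sg x * sg y" by (auto simp: sg_def)
lemma sg_sq: "sg x * sg x = 1" by (auto simp: sg_def)
lemma sg_mod: "even (int M) \<Longrightarrow> sg (x mod int M) = sg x"
  unfolding sg_def by (metis dvd_mod_iff)

lemma sum_sg_even: "(\<Sum>e<2*k. (sg (int e) :: 'a::field)) = 0"
proof (induction k)
  case 0 then show ?case by simp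
next
  case (Suc k)
  have "(\<Sum>e<2*Suc k. (sg (int e)::'a)) = (\<Sum>e<2*k. sg (int e)) + sg (int (2*k)) + sg (int (2*k+1))"
    by (simp add: lessThan_Suc)
  also have "\<dots> = 0" using Suc by (simp add: sg_def)
  finally show ?case .
qed

locale omega_setup = rho_setup +
  fixes \<omega> :: "'a::field"
  assumes om_rho: "\<omega> ^ \<rho> = 1" and om_ne1: "\<omega> \<noteq> 1" and three0: "(3::'a) = 0"
begin

lemma om_mod: "\<omega> ^ k = \<omega> ^ (k mod \<rho>)"
proof -
  have "\<omega> ^ k = \<omega> ^ (\<rho> * (k div \<rho>) + k mod \<rho>)" by simp
  also have "\<dots> = (\<omega> ^ \<rho>) ^ (k div \<rho>) * \<omega> ^ (k mod \<rho>)" by (simp only: power_add power_mult)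
  also have "\<dots> = \<omega> ^ (k mod \<rho>)" by (simp add: om_rho)
  finally show ?thesis .
qed

lemma om_cong: "k mod \<rho> = l mod \<rho> \<Longrightarrow> \<omega> ^ k = \<omega> ^ l"
  by (metis om_mod)

lemma om_eq1: "\<omega> ^ k = 1 \<longleftrightarrow> \<rho> dvd k"
proof
  assume "\<rho> dvd k" then obtain t where "k = \<rho> * t" by blast
  then show "\<omega> ^ k = 1" by (simp add: power_mult om_rho)
next
  assume k1: "\<omega> ^ k = 1"
  show "\<rho> dvd k"
  proof (rule ccontr)
    assume nd: "\<not> \<rho> dvd k"
    define r where "r = k mod \<rho>"
    have r1: "\<omega> ^ r = 1" using k1 om_mod r_def by simp
    have "\<not> \<rho> dvd r" using nd by (simp add: r_def dvd_eq_mod_eq_0)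
    then have "[r ^ (\<rho> - 1) = 1] (mod \<rho>)" using fermat_theorem[OF rprime] by blast
    then have "(r * r ^ (\<rho> - 2)) mod \<rho> = 1 mod \<rho>" using rho_ge5
      by (simp add: cong_def power_Suc[symmetric] Suc_diff_Suc numeral_2_eq_2)
    then have "\<omega> ^ (r * r ^ (\<rho> - 2)) = \<omega> ^ 1" by (rule om_cong)
    then have "\<omega> = 1" using r1 by (simp add: power_mult)
    then show False using om_ne1 by simp
  qed
qed

lemma sum_om: "(\<Sum>s<\<rho>. \<omega> ^ (k * s)) = (if \<rho> dvd k then of_nat \<rho> else 0)"
proof (cases "\<rho> dvd k")
  case True
  then have "\<omega> ^ (k * s) = 1" for s using om_eq1 by simp
  then show ?thesis using True by simp
next
  case False
  then have z: "\<omega> ^ k \<noteq> 1" using om_eq1 by simp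
  have "(\<Sum>s<\<rho>. \<omega> ^ (k * s)) = (\<Sum>s<\<rho>. (\<omega> ^ k) ^ s)" by (simp add: power_mult)
  also have "\<dots> = (1 - (\<omega>^k)^\<rho>) / (1 - \<omega>^k)" using z by (simp add: sum_gp_strict)
  also have "(\<omega>^k)^\<rho> = 1" by (simp add: power_mult[symmetric] mult.commute power_mult om_rho)
  finally show ?thesis using False by simp
qed

lemma of_nat_mod3: "(of_nat n :: 'a) = of_nat (n mod 3)"
proof -
  have "(of_nat n :: 'a) = of_nat (3 * (n div 3) + n mod 3)" by simp
  also have "\<dots> = of_nat 3 * of_nat (n div 3) + of_nat (n mod 3)" by (simp only: of_nat_add of_nat_mult)
  also have "\<dots> = of_nat (n mod 3)" using three0 by simp
  finally show ?thesis .
qed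

lemma two_ne0: "(2::'a) \<noteq> 0"
proof
  assume "(2::'a) = 0"
  moreover have "(3::'a) = 2 + 1" by simp
  ultimately have "(3::'a) = 1" by simp
  then show False using three0 by simp
qed

lemma rho_ne0: "(of_nat \<rho> :: 'a) \<noteq> 0"
proof -
  have "\<not> 3 dvd \<rho>"
  proof
    assume "3 dvd \<rho>"
    moreover have H: "\<forall>m. m dvd \<rho> \<longrightarrow> m = 1 \<or> m = \<rho>" using rprime by (simp add: prime_nat_iff)
    ultimately have "(3::nat) = 1 \<or> 3 = \<rho>" by blast
    then have "\<rho> \<le> 3" by simp
    then show False using rho_ge5 by simp
  qed
  then have "\<rho> mod 3 \<noteq> 0" by (simp add: dvd_eq_mod_eq_0)
  moreover have "\<rho> mod 3 < 3" by simp
  ultimately have "\<rho> mod 3 = 1 \<or> \<rho> mod 3 = 2" by linarith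
  then show ?thesis
  proof
    assume "\<rho> mod 3 = 1" then show ?thesis using of_nat_mod3[of \<rho>] by simp
  next
    assume "\<rho> mod 3 = 2" then show ?thesis using of_nat_mod3[of \<rho>] two_ne0 by simp
  qed
qed

definition P :: "int \<Rightarrow> 'a" where "P x = \<omega> ^ (3 ^ nat (x mod int M))"

lemma M_pos: "M > 0" using M_ge4 by simp

lemma P_per: "P (x mod int M) = P x" by (simp add: P_def)

lemma om_pow3: "\<omega> ^ (3 ^ n) = \<omega> ^ (3 ^ (n mod M))"
  by (rule om_cong) (rule pow3_mod_exp)

lemma P_nat: "P (int n) = \<omega> ^ (3 ^ n)"
proof -
  have "nat (int n mod int M) = n mod M" by (simp add: nat_mod_as_int)
  then show ?thesis by (simp add: P_def om_pow3[of n])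
qed

lemma om_pow3_mult: "\<omega> ^ ((3 ^ e mod \<rho>) * 3 ^ u) = P (int e + int u)"
proof -
  have "(3 ^ e mod \<rho>) * 3 ^ u mod \<rho> = 3 ^ (e + u) mod \<rho>"
    by (simp add: power_add mod_mult_left_eq)
  then have "\<omega> ^ ((3 ^ e mod \<rho>) * 3 ^ u) = \<omega> ^ (3 ^ (e + u))" by (rule om_cong)
  then show ?thesis using P_nat[of "e+u"] by simp
qed

lemma sgM: "sg (x mod int M) = sg x"
  using sg_mod M_even by simp

definition G :: 'a where "G = (\<Sum>e<M. sg (int e) * P (int e))"

lemma rho_dvd_iff: "t < M \<Longrightarrow> \<rho> dvd (3 ^ t + 1) \<longleftrightarrow> t = h"
proof
  assume t: "t < M" and d: "\<rho> dvd (3 ^ t + 1)"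
  have "(3 ^ t mod \<rho> + 1) mod \<rho> = (3^t + 1) mod \<rho>" by (rule mod_add_left_eq)
  then have "(3 ^ t mod \<rho> + 1) mod \<rho> = 0" using d by (simp only: dvd_eq_mod_eq_0)
  moreover have "3 ^ t mod \<rho> + 1 \<le> \<rho>" using rho_ge5 by (simp add: Suc_le_eq)
  moreover have "3 ^ t mod \<rho> + 1 > 0" by simp
  ultimately have "3 ^ t mod \<rho> + 1 = \<rho>"
    by (metis le_neq_implies_less mod_less neq0_conv)
  then have "3 ^ t mod \<rho> = \<rho> - 1" by simp
  then show "t = h" using pow3_eq_minus1 t by blast
next
  assume "t = h"
  then have "3 ^ t mod \<rho> + 1 = \<rho>" using pow3_h rho_ge5 by simp
  then have "(3 ^ t + 1) mod \<rho> = 0" by (metis mod_add_left_eq mod_self)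
  then show "\<rho> dvd (3 ^ t + 1)" by (simp add: dvd_eq_mod_eq_0)
qed

lemma inner_sum: "t < M \<Longrightarrow> (\<Sum>e<M. P (int e) * P (int e + int t)) = (if t = h then of_nat \<rho> - 1 else -1)"
proof -
  assume t: "t < M"
  define v :: nat where "v = 3 ^ t + 1"
  have "P (int e) * P (int e + int t) = \<omega> ^ ((3 ^ e mod \<rho>) * v)" for e
  proof -
    have "P (int e) * P (int e + int t) = \<omega> ^ (3 ^ e) * \<omega> ^ (3 ^ (e + t))"
      using P_nat[of e] P_nat[of "e + t"] by simp
    also have "\<dots> = \<omega> ^ (3 ^ e * v)" by (simp add: v_def power_add algebra_simps)
    also have "\<dots> = \<omega> ^ ((3 ^ e mod \<rho>) * v)" by (rule om_cong) (simp add: mod_mult_left_eq)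
    finally show ?thesis .
  qed
  then have "(\<Sum>e<M. P (int e) * P (int e + int t)) = (\<Sum>e<M. \<omega> ^ ((3 ^ e mod \<rho>) * v))" by simp
  also have "\<dots> = (\<Sum>k\<in>{1..<\<rho>}. \<omega> ^ (k * v))"
    using sum.reindex_bij_betw[OF pow3_bij, of "\<lambda>k. \<omega> ^ (k * v)"] by simp
  also have "\<dots> = (\<Sum>k<\<rho>. \<omega> ^ (v * k)) - 1"
  proof -
    have "{..<\<rho>} = insert 0 {1..<\<rho>}" using rho_ge5 by auto
    then have "(\<Sum>k<\<rho>. \<omega> ^ (k * v)) = 1 + (\<Sum>k\<in>{1..<\<rho>}. \<omega> ^ (k * v))" by simp
    then show ?thesis by (simp add: mult.commute)
  qed
  also have "\<dots> = (if \<rho> dvd v then of_nat \<rho> else 0) - 1" by (simp add: sum_om)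
  also have "\<dots> = (if t = h then of_nat \<rho> - 1 else -1)" using rho_dvd_iff[OF t] by (simp add: v_def)
  finally show ?thesis .
qed

lemma G_sq: "G * G = sg (int h) * of_nat \<rho>"
proof -
  let ?f = "\<lambda>x. sg x * P x"
  have per: "?f (x mod int M) = ?f x" for x by (simp add: sgM P_per)
  have "G * G = (\<Sum>e<M. \<Sum>f<M. ?f (int e) * ?f (int f))"
    unfolding G_def by (simp add: sum_product)
  also have "\<dots> = (\<Sum>e<M. \<Sum>t<M. ?f (int e) * ?f (int e + int t))"
  proof (rule sum.cong[OF refl])
    fix e
    have "(\<Sum>f<M. ?f (int e) * ?f (int f)) = ?f (int e) * (\<Sum>f<M. ?f (int f))" by (simp add: sum_distrib_left)
    also have "(\<Sum>f<M. ?f (int f)) = (\<Sum>t<M. ?f (int e + int t))"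
      using sum_periodic_shift[of ?f M "int e", OF per M_pos] by simp
    finally show "(\<Sum>f<M. ?f (int e) * ?f (int f)) = (\<Sum>t<M. ?f (int e) * ?f (int e + int t))"
      by (simp add: sum_distrib_left)
  qed
  also have "\<dots> = (\<Sum>e<M. \<Sum>t<M. sg (int t) * (P (int e) * P (int e + int t)))"
  proof -
    have fe: "?f (int e) * ?f (int e + int t) = sg (int t) * (P (int e) * P (int e + int t))" for e t
    proof -
      have "sg (int e + int t) = sg (int e) * (sg (int t) :: 'a)" by (rule sg_add)
      then have "?f (int e) * ?f (int e + int t) = (sg (int e) * sg (int e)) * sg (int t) * (P (int e) * P (int e + int t))"
        by (simp add: algebra_simps)
      then show ?thesis by (simp add: sg_sq)
    qed
    show ?thesis by (simp only: fe)
  qed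
  also have "\<dots> = (\<Sum>t<M. sg (int t) * (\<Sum>e<M. P (int e) * P (int e + int t)))"
    by (subst sum.swap) (simp add: sum_distrib_left)
  also have "\<dots> = (\<Sum>t<M. sg (int t) * (if t = h then of_nat \<rho> else 0) - sg (int t))"
  proof (rule sum.cong[OF refl])
    fix t assume "t \<in> {..<M}"
    then have I: "(\<Sum>e<M. P (int e) * P (int e + int t)) = (if t = h then of_nat \<rho> - 1 else -1)"
      by (simp add: inner_sum)
    show "sg (int t) * (\<Sum>e<M. P (int e) * P (int e + int t)) = sg (int t) * (if t = h then of_nat \<rho> else 0) - sg (int t)"
      unfolding I by (simp add: algebra_simps)
  qed
  also have "\<dots> = (\<Sum>t<M. sg (int t) * (if t = h then of_nat \<rho> else 0)) - (\<Sum>t<M. sg (int t))"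
    by (simp add: sum_subtractf)
  also have "(\<Sum>t<M. sg (int t)) = (0::'a)" using sum_sg_even[of h] M_h by simp
  also have "(\<Sum>t<M. sg (int t) * (if t = h then of_nat \<rho> else (0::'a))) = sg (int h) * of_nat \<rho>"
  proof -
    have "(\<Sum>t<M. sg (int t) * (if t = h then of_nat \<rho> else (0::'a))) = (\<Sum>t<M. if t = h then sg (int t) * of_nat \<rho> else 0)"
      by (rule sum.cong) auto
    also have "\<dots> = sg (int h) * of_nat \<rho>" using h_less by (simp add: sum.delta)
    finally show ?thesis .
  qed
  finally show ?thesis by simp
qed

lemma G_ne0: "G \<noteq> 0"
proof
  assume "G = 0"
  then have "sg (int h) * (of_nat \<rho> :: 'a) = 0" using G_sq by simp
  moreover have "sg (int h) \<noteq> (0::'a)" by (simp add: sg_def)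
  ultimately show False using rho_ne0 by simp
qed

end

context omega_setup
begin

definition cc :: "(nat \<Rightarrow> 'a) \<Rightarrow> nat \<Rightarrow> 'a" where
  "cc b i = (\<Sum>j<h. b j * \<omega> ^ (i * 9 ^ j))"

definition CC :: "(nat \<Rightarrow> 'a) \<Rightarrow> int \<Rightarrow> 'a" where
  "CC b t = (\<Sum>j<h. b j * P (t + 2 * int j))"

lemma P_shift_per: "P ((x mod int M) + y) = P (x + y)"
proof -
  have "((x mod int M) + y) mod int M = (x + y) mod int M" by (simp add: mod_add_left_eq)
  then show ?thesis using P_per[of "(x mod int M) + y"] P_per[of "x + y"] by simp
qed

lemma CC_per: "CC b (x mod int M) = CC b x"
  unfolding CC_def by (simp add: P_shift_per)

lemma cc_pow: "cc b (3 ^ e mod \<rho>) = CC b (int e)"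
proof -
  have "\<omega> ^ ((3 ^ e mod \<rho>) * 9 ^ j) = P (int e + 2 * int j)" for j
  proof -
    have "(9::nat) ^ j = 3 ^ (2 * j)" by (simp add: power_mult)
    then have "\<omega> ^ ((3 ^ e mod \<rho>) * 9 ^ j) = \<omega> ^ ((3 ^ e mod \<rho>) * 3 ^ (2*j))" by simp
    also have "\<dots> = P (int e + int (2 * j))" by (rule om_pow3_mult)
    finally show ?thesis by simp
  qed
  then show ?thesis unfolding cc_def CC_def by simp
qed

lemma cc_mod: "cc b (i mod \<rho>) = cc b i"
proof -
  have "\<omega> ^ ((i mod \<rho>) * 9 ^ j) = \<omega> ^ (i * 9 ^ j)" for j
    by (rule om_cong) (simp add: mod_mult_left_eq)
  then show ?thesis unfolding cc_def by simp
qed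

lemma cc_0: "cc b 0 = (\<Sum>j<h. b j)" unfolding cc_def by simp

definition dl :: "nat \<Rightarrow> nat" where "dl = inv_into {..<M} (\<lambda>e. 3 ^ e mod \<rho>)"

lemma dl_pow: assumes "e < M" shows "dl (3 ^ e mod \<rho>) = e"
  unfolding dl_def by (rule inv_into_f_f[OF pow3_inj]) (use assms in simp)

definition dd :: "(nat \<Rightarrow> 'a) \<Rightarrow> nat \<Rightarrow> 'a" where
  "dd b i = (if i = 0 then 0 else sg (int (dl i)) * CC b (- int (dl i)))"

lemma dd_pow: "e < M \<Longrightarrow> dd b (3 ^ e mod \<rho>) = sg (int e) * CC b (- int e)"
  unfolding dd_def using pow3_nz[of e] dl_pow by simp

definition DD :: "(nat \<Rightarrow> 'a) \<Rightarrow> nat \<Rightarrow> 'a" where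
  "DD b s = (\<Sum>i<\<rho>. dd b i * \<omega> ^ (i * s))"

lemma lessThan_rho: "{..<\<rho>} = insert 0 {1..<\<rho>}" using rho_ge5 by auto

lemma DD_e: "DD b s = (\<Sum>e<M. sg (int e) * CC b (- int e) * \<omega> ^ ((3 ^ e mod \<rho>) * s))"
proof -
  have "DD b s = (\<Sum>i\<in>{1..<\<rho>}. dd b i * \<omega> ^ (i * s))"
    unfolding DD_def lessThan_rho by (simp add: dd_def)
  also have "\<dots> = (\<Sum>e<M. dd b (3 ^ e mod \<rho>) * \<omega> ^ ((3 ^ e mod \<rho>) * s))"
    using sum.reindex_bij_betw[OF pow3_bij, of "\<lambda>i. dd b i * \<omega> ^ (i * s)"] by simp
  also have "\<dots> = (\<Sum>e<M. sg (int e) * CC b (- int e) * \<omega> ^ ((3 ^ e mod \<rho>) * s))"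
    by (rule sum.cong[OF refl]) (simp add: dd_pow)
  finally show ?thesis .
qed

lemma DD_mod: "DD b (s mod \<rho>) = DD b s"
proof -
  have "\<omega> ^ (i * (s mod \<rho>)) = \<omega> ^ (i * s)" for i
    by (rule om_cong) (simp add: mod_mult_right_eq)
  then show ?thesis unfolding DD_def by simp
qed

lemma half_zero: "(x::'a) = - x \<Longrightarrow> x = 0"
proof -
  assume "x = - x"
  then have "- x = x" by (rule sym)
  then have "x + x = 0" by (simp only: neg_eq_iff_add_eq_0)
  then have "2 * x = 0" by (simp only: mult_2)
  then show "x = 0" using two_ne0 by simp
qed

lemma DD_odd: "odd u \<Longrightarrow> DD b (3 ^ u) = 0"
proof -
  assume u: "odd u"
  have "DD b (3 ^ u) = (\<Sum>e<M. sg (int e) * CC b (- int e) * P (int e + int u))"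
    unfolding DD_e by (simp add: om_pow3_mult)
  also have "\<dots> = (\<Sum>j<h. b j * (\<Sum>e<M. sg (int e) * P (2 * int j - int e) * P (int e + int u)))"
  proof -
    have "sg (int e) * CC b (- int e) * P (int e + int u) = (\<Sum>j<h. b j * (sg (int e) * P (2 * int j - int e) * P (int e + int u)))" for e
    proof -
      have "sg (int e) * CC b (- int e) * P (int e + int u) = (\<Sum>j<h. sg (int e) * (b j * P (- int e + 2 * int j)) * P (int e + int u))"
        unfolding CC_def by (simp add: sum_distrib_left sum_distrib_right)
      also have "\<dots> = (\<Sum>j<h. b j * (sg (int e) * P (2 * int j - int e) * P (int e + int u)))"
        by (rule sum.cong[OF refl]) (simp add: algebra_simps)
      finally show ?thesis .
    qed
    then have "(\<Sum>e<M. sg (int e) * CC b (- int e) * P (int e + int u)) = (\<Sum>e<M. \<Sum>j<h. b j * (sg (int e) * P (2 * int j - int e) * P (int e + int u)))"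
      by simp
    also have "\<dots> = (\<Sum>j<h. \<Sum>e<M. b j * (sg (int e) * P (2 * int j - int e) * P (int e + int u)))"
      by (rule sum.swap)
    also have "\<dots> = (\<Sum>j<h. b j * (\<Sum>e<M. sg (int e) * P (2 * int j - int e) * P (int e + int u)))"
      by (simp add: sum_distrib_left)
    finally show ?thesis .
  qed
  also have "\<dots> = 0"
  proof (rule sum.neutral, rule ballI)
    fix j assume "j \<in> {..<h}"
    define f where "f x = sg x * P (2 * int j - x) * P (x + int u)" for x
    have per: "f (x mod int M) = f x" for x
    proof -
      have "(2 * int j - x mod int M) mod int M = (2 * int j - x) mod int M"
        by (rule mod_diff_right_eq)
      then have a: "P (2 * int j - x mod int M) = P (2 * int j - x)"
        using P_per[of "2 * int j - x mod int M"] P_per[of "2 * int j - x"] by simp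
      have b: "P (x mod int M + int u) = P (x + int u)" by (rule P_shift_per)
      show ?thesis unfolding f_def a b sgM ..
    qed
    let ?c = "2 * int j - int u"
    have "(\<Sum>e<M. f (?c - int e)) = (\<Sum>e<M. f (int e))" by (rule sum_periodic_refl[of f M, OF per M_pos])
    moreover have "f (?c - int e) = - f (int e)" for e
    proof -
      have "sg (?c - int e) = sg ?c * (sg (int e) :: 'a)" by (rule sg_diff)
      moreover have "sg ?c = (-1 :: 'a)" using u by (simp add: sg_def)
      moreover have "2 * int j - (?c - int e) = int e + int u" by simp
      moreover have "?c - int e + int u = 2 * int j - int e" by simp
      moreover have "int u + int e = int e + int u" by simp
      ultimately show ?thesis unfolding f_def by (simp add: algebra_simps)
    qed
    ultimately have "(\<Sum>e<M. f (int e)) = - (\<Sum>e<M. f (int e))" by (simp add: sum_negf)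
    then have "(\<Sum>e<M. f (int e)) = 0" by (rule half_zero)
    then show "b j * (\<Sum>e<M. sg (int e) * P (2 * int j - int e) * P (int e + int u)) = 0"
      unfolding f_def by simp
  qed
  finally show ?thesis .
qed

lemma DD_0: "DD b 0 = G * cc b 0"
proof -
  have "DD b 0 = (\<Sum>e<M. sg (int e) * CC b (- int e))"
    unfolding DD_e by simp
  also have "\<dots> = (\<Sum>j<h. b j * (\<Sum>e<M. sg (int e) * P (2 * int j - int e)))"
  proof -
    have "sg (int e) * CC b (- int e) = (\<Sum>j<h. b j * (sg (int e) * P (2 * int j - int e)))" for e
    proof -
      have "sg (int e) * CC b (- int e) = (\<Sum>j<h. sg (int e) * (b j * P (- int e + 2 * int j)))"
        unfolding CC_def by (simp add: sum_distrib_left)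
      also have "\<dots> = (\<Sum>j<h. b j * (sg (int e) * P (2 * int j - int e)))"
        by (rule sum.cong[OF refl]) (simp add: algebra_simps)
      finally show ?thesis .
    qed
    then have "(\<Sum>e<M. sg (int e) * CC b (- int e)) = (\<Sum>e<M. \<Sum>j<h. b j * (sg (int e) * P (2 * int j - int e)))"
      by simp
    also have "\<dots> = (\<Sum>j<h. \<Sum>e<M. b j * (sg (int e) * P (2 * int j - int e)))"
      by (rule sum.swap)
    also have "\<dots> = (\<Sum>j<h. b j * (\<Sum>e<M. sg (int e) * P (2 * int j - int e)))"
      by (simp add: sum_distrib_left)
    finally show ?thesis .
  qed
  also have "\<dots> = (\<Sum>j<h. b j * G)"
  proof (rule sum.cong[OF refl])
    fix j
    define g where "g x = sg x * P x" for x
    have per: "g (x mod int M) = g x" for x unfolding g_def by (simp add: sgM P_per)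
    have "(\<Sum>e<M. g (2 * int j - int e)) = (\<Sum>e<M. g (int e))" by (rule sum_periodic_refl[of g M, OF per M_pos])
    moreover have "g (2 * int j - int e) = sg (int e) * P (2 * int j - int e)" for e
      unfolding g_def by (simp add: sg_diff sg_def)
    ultimately have "(\<Sum>e<M. sg (int e) * P (2 * int j - int e)) = G" unfolding G_def g_def by simp
    then show "b j * (\<Sum>e<M. sg (int e) * P (2 * int j - int e)) = b j * G" by simp
  qed
  also have "\<dots> = G * cc b 0" unfolding cc_0 by (simp add: sum_distrib_left mult.commute)
  finally show ?thesis .
qed

end

lemma card_bij_filter:
  assumes "bij_betw f X Y"
  shows "card {y\<in>Y. Q y} = card {x\<in>X. Q (f x)}"
proof -
  have "{y\<in>Y. Q y} = f ` {x\<in>X. Q (f x)}" using assms by (auto simp: bij_betw_def)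
  moreover have "inj_on f {x\<in>X. Q (f x)}" using assms by (auto simp: bij_betw_def inj_on_def)
  ultimately show ?thesis by (simp add: card_image)
qed

lemma card_filter_sum:
  "finite A \<Longrightarrow> card {x\<in>A. Q x} = (\<Sum>x\<in>A. if Q x then 1 else 0)"
proof -
  assume "finite A"
  have "card {x\<in>A. Q x} = (\<Sum>x\<in>{x\<in>A. Q x}. 1)" by (rule card_eq_sum)
  also have "\<dots> = (\<Sum>x\<in>A. if Q x then 1 else 0)" using \<open>finite A\<close> by (rule sum.inter_filter)
  finally show ?thesis .
qed

context omega_setup
begin

definition ee :: "(nat \<Rightarrow> 'a) \<Rightarrow> nat \<Rightarrow> 'a" where "ee b j = dd b ((3 * j) mod \<rho>)"
definition EE :: "(nat \<Rightarrow> 'a) \<Rightarrow> nat \<Rightarrow> 'a" where "EE b s = (\<Sum>j<\<rho>. ee b j * \<omega> ^ (j * s))"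

lemma sig_bij: "bij_betw (\<lambda>j. (3 * j) mod \<rho>) {..<\<rho>} {..<\<rho>}"
proof (rule inj_self_bij)
  show "inj_on (\<lambda>j. (3 * j) mod \<rho>) {..<\<rho>}"
  proof (rule inj_onI)
    fix x y assume xy: "x \<in> {..<\<rho>}" "y \<in> {..<\<rho>}" "(3 * x) mod \<rho> = (3 * y) mod \<rho>"
    then have "[3 * x = 3 * y] (mod \<rho>)" by (simp add: cong_def)
    moreover have "coprime 3 \<rho>" using coprime3 by (simp add: coprime_commute)
    ultimately have "[x = y] (mod \<rho>)" using cong_mult_lcancel_nat by blast
    then show "x = y" using xy by (simp add: cong_def)
  qed
  show "(\<lambda>j. (3 * j) mod \<rho>) ` {..<\<rho>} \<subseteq> {..<\<rho>}" using rho_ge5 by auto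
qed simp

lemma EE_eq: "EE b s = DD b (3 ^ (M - 1) * s)"
proof -
  let ?K = "3 ^ (M - 1) * s"
  have "\<omega> ^ (j * s) = \<omega> ^ (((3 * j) mod \<rho>) * ?K)" for j
  proof (rule om_cong)
    have "((3 * j) mod \<rho>) * ?K mod \<rho> = (3 * j) * ?K mod \<rho>" by (simp add: mod_mult_left_eq)
    also have "(3 * j) * ?K = 3 ^ M * (j * s)"
    proof -
      have "(3::nat) * 3 ^ (M - 1) = 3 ^ M" using M_pos by (simp add: power_Suc[symmetric])
      then show ?thesis by (metis mult.assoc mult.left_commute)
    qed
    also have "3 ^ M * (j * s) mod \<rho> = ((3 ^ M mod \<rho>) * (j * s)) mod \<rho>" by (simp add: mod_mult_left_eq)
    also have "\<dots> = (j * s) mod \<rho>" by (simp add: pow3_M)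
    finally show "j * s mod \<rho> = (3 * j mod \<rho>) * ?K mod \<rho>" by simp
  qed
  then have "EE b s = (\<Sum>j<\<rho>. dd b ((3 * j) mod \<rho>) * \<omega> ^ (((3 * j) mod \<rho>) * ?K))"
    unfolding EE_def ee_def by simp
  also have "\<dots> = (\<Sum>i<\<rho>. dd b i * \<omega> ^ (i * ?K))"
    by (rule sum.reindex_bij_betw[OF sig_bij, of "\<lambda>i. dd b i * \<omega> ^ (i * ?K)"])
  finally show ?thesis unfolding DD_def .
qed

lemma EE_0: "EE b 0 = DD b 0" using EE_eq[of b 0] by simp

lemma DDEE_zero:
  assumes s: "s mod \<rho> \<noteq> 0"
  shows "DD b s * EE b s = 0"
proof -
  have "s mod \<rho> \<in> {1..<\<rho>}" using s rho_ge5 by auto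
  then have "s mod \<rho> \<in> (\<lambda>e. 3 ^ e mod \<rho>) ` {..<M}" using pow3_bij by (simp add: bij_betw_def)
  then obtain u where u0: "u \<in> {..<M}" "s mod \<rho> = 3 ^ u mod \<rho>" by (rule imageE)
  then have u: "u < M" "3 ^ u mod \<rho> = s mod \<rho>" by simp_all
  have D: "DD b s = DD b (3 ^ u)"
    using DD_mod[of b s] DD_mod[of b "3^u"] u by simp
  show ?thesis
  proof (cases "odd u")
    case True then show ?thesis using D DD_odd by simp
  next
    case False
    have "(3 ^ (M - 1) * s) mod \<rho> = (3 ^ (M - 1) * (s mod \<rho>)) mod \<rho>" by (simp add: mod_mult_right_eq)
    also have "\<dots> = (3 ^ (M - 1) * (3 ^ u mod \<rho>)) mod \<rho>" using u by simp
    also have "\<dots> = 3 ^ (M - 1 + u) mod \<rho>" by (simp add: mod_mult_right_eq power_add)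
    finally have "EE b s = DD b (3 ^ (M - 1 + u))"
      using EE_eq[of b s] DD_mod[of b "3 ^ (M - 1) * s"] DD_mod[of b "3 ^ (M - 1 + u)"] by simp
    moreover have "odd (M - 1 + u)" using False M_even M_pos by simp
    ultimately show ?thesis using DD_odd by simp
  qed
qed

lemma conv_formula:
  "(\<Sum>s<\<rho>. DD b s * EE b s * \<omega> ^ (s * (\<rho> - k))) =
   (\<Sum>i<\<rho>. \<Sum>j<\<rho>. dd b i * ee b j * (if \<rho> dvd (i + j + (\<rho> - k)) then of_nat \<rho> else 0))"
proof -
  have step1: "DD b s * EE b s * \<omega> ^ (s * (\<rho> - k)) =
     (\<Sum>i<\<rho>. \<Sum>j<\<rho>. dd b i * ee b j * \<omega> ^ ((i + j + (\<rho> - k)) * s))" for s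
  proof -
    have "DD b s * EE b s * \<omega> ^ (s * (\<rho> - k)) =
      (\<Sum>i<\<rho>. \<Sum>j<\<rho>. (dd b i * \<omega> ^ (i * s)) * (ee b j * \<omega> ^ (j * s)) * \<omega> ^ (s * (\<rho> - k)))"
    proof -
      have "DD b s * EE b s = (\<Sum>i<\<rho>. \<Sum>j<\<rho>. (dd b i * \<omega> ^ (i * s)) * (ee b j * \<omega> ^ (j * s)))"
        unfolding DD_def EE_def by (rule sum_product)
      then show ?thesis by (simp only: sum_distrib_right)
    qed
    also have "\<dots> = (\<Sum>i<\<rho>. \<Sum>j<\<rho>. dd b i * ee b j * \<omega> ^ ((i + j + (\<rho> - k)) * s))"
    proof (intro sum.cong refl)
      fix i j
      have "\<omega> ^ ((i + j + (\<rho> - k)) * s) = \<omega> ^ (i * s) * \<omega> ^ (j * s) * \<omega> ^ (s * (\<rho> - k))"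
      proof -
        have "(i + j + (\<rho> - k)) * s = i * s + j * s + s * (\<rho> - k)" by (simp add: algebra_simps)
        then show ?thesis by (simp only: power_add)
      qed
      then show "(dd b i * \<omega> ^ (i * s)) * (ee b j * \<omega> ^ (j * s)) * \<omega> ^ (s * (\<rho> - k)) =
          dd b i * ee b j * \<omega> ^ ((i + j + (\<rho> - k)) * s)" by (simp add: ac_simps)
    qed
    finally show ?thesis .
  qed
  have "(\<Sum>s<\<rho>. DD b s * EE b s * \<omega> ^ (s * (\<rho> - k))) =
      (\<Sum>s<\<rho>. \<Sum>i<\<rho>. \<Sum>j<\<rho>. dd b i * ee b j * \<omega> ^ ((i + j + (\<rho> - k)) * s))"
    by (simp only: step1)
  also have "\<dots> = (\<Sum>i<\<rho>. \<Sum>s<\<rho>. \<Sum>j<\<rho>. dd b i * ee b j * \<omega> ^ ((i + j + (\<rho> - k)) * s))"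
    by (rule sum.swap)
  also have "\<dots> = (\<Sum>i<\<rho>. \<Sum>j<\<rho>. \<Sum>s<\<rho>. dd b i * ee b j * \<omega> ^ ((i + j + (\<rho> - k)) * s))"
    by (rule sum.cong[OF refl]) (rule sum.swap)
  also have "\<dots> = (\<Sum>i<\<rho>. \<Sum>j<\<rho>. dd b i * ee b j * (if \<rho> dvd (i + j + (\<rho> - k)) then of_nat \<rho> else 0))"
    by (intro sum.cong refl) (simp add: sum_distrib_left[symmetric] sum_om)
  finally show ?thesis .
qed

lemma cover:
  assumes c0: "cc b 0 \<noteq> 0" and k: "k < \<rho>"
  shows "\<exists>i<\<rho>. \<exists>j<\<rho>. dd b i \<noteq> 0 \<and> ee b j \<noteq> 0 \<and> (i + j) mod \<rho> = k"
proof (rule ccontr)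
  assume nex: "\<not> ?thesis"
  have "(\<Sum>i<\<rho>. \<Sum>j<\<rho>. dd b i * ee b j * (if \<rho> dvd (i + j + (\<rho> - k)) then of_nat \<rho> else (0::'a))) = 0"
  proof (intro sum.neutral ballI)
    fix i j assume ij: "i \<in> {..<\<rho>}" "j \<in> {..<\<rho>}"
    show "dd b i * ee b j * (if \<rho> dvd (i + j + (\<rho> - k)) then of_nat \<rho> else (0::'a)) = 0"
    proof (cases "\<rho> dvd (i + j + (\<rho> - k))")
      case True
      have "(i + j) mod \<rho> = k"
      proof -
        have "(i + j + (\<rho> - k)) mod \<rho> = 0" using True by simp
        have "(i + j + (\<rho> - k) + k) mod \<rho> = ((i + j + (\<rho> - k)) mod \<rho> + k) mod \<rho>"
          by (rule mod_add_left_eq[symmetric])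
        then have "(i + j + (\<rho> - k) + k) mod \<rho> = k mod \<rho>" using \<open>(i + j + (\<rho> - k)) mod \<rho> = 0\<close> by simp
        moreover have "i + j + (\<rho> - k) + k = (i + j) + \<rho>" using k by simp
        ultimately show ?thesis using k by simp
      qed
      then have "dd b i = 0 \<or> ee b j = 0" using nex ij by blast
      then show ?thesis by auto
    qed simp
  qed
  then have "(\<Sum>s<\<rho>. DD b s * EE b s * \<omega> ^ (s * (\<rho> - k))) = 0" using conv_formula by simp
  moreover have "(\<Sum>s<\<rho>. DD b s * EE b s * \<omega> ^ (s * (\<rho> - k))) = DD b 0 * EE b 0"
  proof -
    have "(\<Sum>s\<in>{1..<\<rho>}. DD b s * EE b s * \<omega> ^ (s * (\<rho> - k))) = 0"
      using DDEE_zero by (intro sum.neutral ballI) simp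
    then show ?thesis unfolding lessThan_rho by simp
  qed
  moreover have "DD b 0 * EE b 0 \<noteq> 0" using EE_0 DD_0 G_ne0 c0 by simp
  ultimately show False by simp
qed

definition "Aset b = {i\<in>{..<\<rho>}. dd b i \<noteq> 0}"
definition "Bset b = {j\<in>{..<\<rho>}. ee b j \<noteq> 0}"

lemma card_AB: assumes "cc b 0 \<noteq> 0" shows "\<rho> \<le> card (Aset b) * card (Bset b)"
proof -
  have "{..<\<rho>} \<subseteq> (\<lambda>(i,j). (i + j) mod \<rho>) ` (Aset b \<times> Bset b)"
  proof
    fix k assume "k \<in> {..<\<rho>}"
    then obtain i j where "i < \<rho>" "j < \<rho>" "dd b i \<noteq> 0" "ee b j \<noteq> 0" "(i + j) mod \<rho> = k"
      using cover[OF assms] by blast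
    then show "k \<in> (\<lambda>(i,j). (i + j) mod \<rho>) ` (Aset b \<times> Bset b)"
      unfolding Aset_def Bset_def by force
  qed
  then have "card {..<\<rho>} \<le> card ((\<lambda>(i,j). (i + j) mod \<rho>) ` (Aset b \<times> Bset b))"
    by (rule card_mono[rotated]) (simp add: Aset_def Bset_def)
  also have "\<dots> \<le> card (Aset b \<times> Bset b)" by (rule card_image_le) (simp add: Aset_def Bset_def)
  finally show ?thesis by (simp add: card_cartesian_product)
qed

lemma card_B: "card (Bset b) = card (Aset b)"
  unfolding Aset_def Bset_def ee_def
  using card_bij_filter[OF sig_bij, of "\<lambda>i. dd b i \<noteq> 0"] by simp

lemma card_A: "card (Aset b) = card {i\<in>{1..<\<rho>}. cc b i \<noteq> 0}"
proof -
  have "Aset b = {i\<in>{1..<\<rho>}. dd b i \<noteq> 0}" unfolding Aset_def lessThan_rho by (auto simp: dd_def)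
  then have "card (Aset b) = card {e\<in>{..<M}. dd b (3 ^ e mod \<rho>) \<noteq> 0}"
    using card_bij_filter[OF pow3_bij, of "\<lambda>i. dd b i \<noteq> 0"] by simp
  also have "{e\<in>{..<M}. dd b (3 ^ e mod \<rho>) \<noteq> 0} = {e\<in>{..<M}. CC b (- int e) \<noteq> 0}"
    by (auto simp: dd_pow sg_def split: if_splits)
  also have "card \<dots> = card {e\<in>{..<M}. CC b (int e) \<noteq> 0}"
  proof -
    define f where "f x = (if CC b x \<noteq> 0 then 1 else (0::nat))" for x
    have per: "f (x mod int M) = f x" for x unfolding f_def by (simp add: CC_per)
    have "(\<Sum>e<M. f (0 - int e)) = (\<Sum>e<M. f (int e))" by (rule sum_periodic_refl[of f M, OF per M_pos])
    moreover have "card {e\<in>{..<M}. CC b (- int e) \<noteq> 0} = (\<Sum>e<M. f (0 - int e))"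
      using card_filter_sum[of "{..<M}" "\<lambda>e. CC b (- int e) \<noteq> 0"] by (simp add: f_def)
    moreover have "card {e\<in>{..<M}. CC b (int e) \<noteq> 0} = (\<Sum>e<M. f (int e))"
      using card_filter_sum[of "{..<M}" "\<lambda>e. CC b (int e) \<noteq> 0"] by (simp add: f_def)
    ultimately show ?thesis by simp
  qed
  also have "\<dots> = card {i\<in>{1..<\<rho>}. cc b i \<noteq> 0}"
    using card_bij_filter[OF pow3_bij, of "\<lambda>i. cc b i \<noteq> 0"] by (simp add: cc_pow)
  finally show ?thesis .
qed

lemma weight_split: assumes "cc b 0 \<noteq> 0"
  shows "card {i\<in>{..<\<rho>}. cc b i \<noteq> 0} = Suc (card {i\<in>{1..<\<rho>}. cc b i \<noteq> 0})"
proof -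
  have "{i\<in>{..<\<rho>}. cc b i \<noteq> 0} = insert 0 {i\<in>{1..<\<rho>}. cc b i \<noteq> 0}"
    using assms unfolding lessThan_rho by auto
  moreover have "finite {i\<in>{1..<\<rho>}. cc b i \<noteq> 0}" by simp
  moreover have "0 \<notin> {i\<in>{1..<\<rho>}. cc b i \<noteq> 0}" by simp
  ultimately show ?thesis using card_insert_disjoint[of "{i\<in>{1..<\<rho>}. cc b i \<noteq> 0}" 0] by simp
qed

lemma sqrt_bound0: assumes "cc b 0 \<noteq> 0"
  shows "\<rho> \<le> (card {i\<in>{..<\<rho>}. cc b i \<noteq> 0} - 1) ^ 2"
  using card_AB[OF assms] card_B card_A weight_split[OF assms] by (simp add: power2_eq_square)

lemma sqrt_bound: assumes "k0 < \<rho>" "cc b k0 \<noteq> 0"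
  shows "\<rho> \<le> (card {i\<in>{..<\<rho>}. cc b i \<noteq> 0} - 1) ^ 2"
proof -
  define b' where "b' j = b j * \<omega> ^ (k0 * 9 ^ j)" for j
  have cb: "cc b' i = cc b (i + k0)" for i
    unfolding cc_def b'_def by (intro sum.cong refl) (simp add: add_mult_distrib power_add ac_simps)
  have "cc b' 0 \<noteq> 0" using cb assms by simp
  then have "\<rho> \<le> (card {i\<in>{..<\<rho>}. cc b' i \<noteq> 0} - 1) ^ 2" by (rule sqrt_bound0)
  moreover have "card {i\<in>{..<\<rho>}. cc b' i \<noteq> 0} = card {i\<in>{..<\<rho>}. cc b i \<noteq> 0}"
  proof -
    have bij: "bij_betw (\<lambda>i. (i + k0) mod \<rho>) {..<\<rho>} {..<\<rho>}"
    proof (rule inj_self_bij)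
      show "inj_on (\<lambda>i. (i + k0) mod \<rho>) {..<\<rho>}"
      proof (rule inj_onI)
        fix x y assume xy: "x \<in> {..<\<rho>}" "y \<in> {..<\<rho>}" "(x + k0) mod \<rho> = (y + k0) mod \<rho>"
        then have "[x + k0 = y + k0] (mod \<rho>)" by (simp add: cong_def)
        then have "[x = y] (mod \<rho>)" by (simp add: cong_add_rcancel_nat)
        then show "x = y" using xy by (simp add: cong_def)
      qed
      show "(\<lambda>i. (i + k0) mod \<rho>) ` {..<\<rho>} \<subseteq> {..<\<rho>}" using rho_ge5 by auto
    qed simp
    show ?thesis using card_bij_filter[OF bij, of "\<lambda>i. cc b i \<noteq> 0"] by (simp add: cc_mod cb)
  qed
  ultimately show ?thesis by simp
qed

end

locale main_setup =
  fixes \<rho> m :: nat and \<alpha> \<beta> \<theta> :: "'a::{field,finite}"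
  assumes mp: "prime \<rho>" "odd \<rho>" "ord \<rho> 3 = \<rho> - 1" "\<rho> \<noteq> 3"
    and m_def: "m = \<rho> - 1" and cardA: "card (UNIV::'a set) = 3 ^ m"
    and prim: "primitive_element \<alpha>"
    and beta: "\<beta> = \<alpha> ^ ((3 ^ m - 1) div (4 * \<rho>))"
    and theta: "\<theta> = inverse \<beta>"

sublocale main_setup \<subseteq> rho_setup \<rho>
  by unfold_locales (rule mp)+

context main_setup
begin

lemma m_M: "m = M" by (simp add: m_def M_def)

lemma three0: "(3::'a) = 0"
  using three_eq_zero[OF cardA] M_ge4 m_M by simp

lemma q_gt1: "(3::nat) ^ m > 1"
proof -
  have "1 \<le> m" using M_ge4 m_M by simp
  then have "(3::nat) ^ 1 \<le> 3 ^ m" by (rule power_increasing) simp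
  then show ?thesis by simp
qed

lemma alpha_nz: "\<alpha> \<noteq> 0" using prim by (simp add: primitive_element_def)

lemma alpha_q: "\<alpha> ^ (3 ^ m - 1) = 1"
  using pow_card_minus_one[OF alpha_nz] cardA by simp

lemma alpha_q': "\<alpha> ^ (3 ^ m - Suc 0) = 1" using alpha_q by simp

lemma alpha_pow_mod: "\<alpha> ^ k = \<alpha> ^ (k mod (3 ^ m - 1))"
proof -
  have "\<alpha> ^ k = \<alpha> ^ ((3 ^ m - 1) * (k div (3 ^ m - 1)) + k mod (3 ^ m - 1))" by simp
  also have "\<dots> = (\<alpha> ^ (3 ^ m - 1)) ^ (k div (3 ^ m - 1)) * \<alpha> ^ (k mod (3 ^ m - 1))"
    by (simp only: power_add power_mult)
  finally show ?thesis by (simp add: alpha_q alpha_q')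
qed

lemma alpha_ord: assumes "\<alpha> ^ k = 1" shows "(3 ^ m - 1) dvd k"
proof (rule ccontr)
  assume nd: "\<not> (3 ^ m - 1) dvd k"
  define r where "r = k mod (3 ^ m - 1)"
  have r0: "r \<noteq> 0" using nd by (simp add: r_def dvd_eq_mod_eq_0)
  have rlt: "r < 3 ^ m - 1" using q_gt1 by (simp add: r_def)
  have ar: "\<alpha> ^ r = 1" using assms alpha_pow_mod[of k] by (simp add: r_def)
  have "UNIV - {0} \<subseteq> (\<lambda>j. \<alpha> ^ j) ` {..<r}"
  proof
    fix x :: 'a assume "x \<in> UNIV - {0}"
    then obtain n where n: "x = \<alpha> ^ n" using prim by (auto simp: primitive_element_def)
    have "\<alpha> ^ n = \<alpha> ^ (r * (n div r) + n mod r)" by simp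
    also have "\<dots> = (\<alpha> ^ r) ^ (n div r) * \<alpha> ^ (n mod r)" by (simp only: power_add power_mult)
    also have "\<dots> = \<alpha> ^ (n mod r)" using ar by simp
    finally show "x \<in> (\<lambda>j. \<alpha> ^ j) ` {..<r}" using n r0 by auto
  qed
  then have "card (UNIV - {0::'a}) \<le> card ((\<lambda>j. \<alpha> ^ j) ` {..<r})" by (rule card_mono[rotated]) simp
  also have "\<dots> \<le> r" using card_image_le[of "{..<r}" "\<lambda>j. \<alpha> ^ j"] by simp
  finally have "card (UNIV - {0::'a}) \<le> r" .
  moreover have "card (UNIV - {0::'a}) = 3 ^ m - 1" using cardA by (simp add: card_Diff_subset)
  ultimately show False using rlt by simp
qed

lemma dvd4rho: "4 * \<rho> dvd 3 ^ m - 1"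
proof -
  have "3 ^ M mod \<rho> = 1 mod \<rho>" using pow3_M rho_ge5 by simp
  then have a: "\<rho> dvd 3 ^ M - 1" using mod_eq_dvd_iff_nat[of 1 "3 ^ M" \<rho>] by simp
  have "(3::nat) ^ M = 9 ^ h" unfolding M_h by (simp add: power_mult)
  moreover have "(9::nat) ^ h mod 4 = 1"
  proof -
    have "(9::nat) ^ h mod 4 = (9 mod 4) ^ h mod 4" by (rule power_mod[symmetric])
    then show ?thesis by simp
  qed
  ultimately have "3 ^ M mod 4 = 1 mod (4::nat)" by simp
  then have b: "(4::nat) dvd 3 ^ M - 1" using mod_eq_dvd_iff_nat[of 1 "3 ^ M" 4] by simp
  have "\<not> \<rho> dvd 4"
  proof
    assume "\<rho> dvd 4" then have "\<rho> \<le> 4" by (simp add: dvd_imp_le)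
    then show False using rho_ge5 by simp
  qed
  then have "coprime \<rho> 4" using rprime by (simp add: prime_imp_coprime)
  then have "coprime 4 \<rho>" by (simp add: coprime_commute)
  then show ?thesis using divides_mult[OF b a] m_M by simp
qed

definition "N = (3 ^ m - 1) div (4 * \<rho>)"

lemma N_eq: "3 ^ m - 1 = 4 * \<rho> * N" using dvd4rho by (simp add: N_def)
lemma N_pos: "N > 0" using N_eq q_gt1 by (cases N) auto

lemma beta_N: "\<beta> = \<alpha> ^ N" using beta by (simp add: N_def)

lemma beta_nz: "\<beta> \<noteq> 0" using beta_N alpha_nz by simp
lemma theta_nz: "\<theta> \<noteq> 0" using theta beta_nz by simp

lemma theta_pow1: "\<theta> ^ n = 1 \<longleftrightarrow> 4 * \<rho> dvd n"
proof -
  have "\<theta> ^ n = inverse (\<beta> ^ n)" using theta by (simp add: power_inverse)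
  then have "\<theta> ^ n = 1 \<longleftrightarrow> \<beta> ^ n = 1" by (metis inverse_1 inverse_inverse_eq)
  also have "\<beta> ^ n = \<alpha> ^ (N * n)" using beta_N by (simp add: power_mult)
  also have "\<alpha> ^ (N * n) = 1 \<longleftrightarrow> (3 ^ m - 1) dvd N * n"
  proof
    assume "\<alpha> ^ (N * n) = 1" then show "(3 ^ m - 1) dvd N * n" by (rule alpha_ord)
  next
    assume "(3 ^ m - 1) dvd N * n"
    then obtain t where "N * n = (3 ^ m - 1) * t" by blast
    then show "\<alpha> ^ (N * n) = 1" by (simp add: power_mult alpha_q alpha_q')
  qed
  also have "(3 ^ m - 1) dvd N * n \<longleftrightarrow> 4 * \<rho> dvd n"
  proof -
    have "(3 ^ m - 1) dvd N * n \<longleftrightarrow> N * (4 * \<rho>) dvd N * n" using N_eq by (simp add: mult.commute)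
    also have "\<dots> \<longleftrightarrow> 4 * \<rho> dvd n" using N_pos by simp
    finally show ?thesis .
  qed
  finally show ?thesis .
qed

lemma theta_2rho: "\<theta> ^ (2 * \<rho>) = -1"
proof -
  have "(\<theta> ^ (2 * \<rho>))\<^sup>2 = 1"
  proof -
    have "(\<theta> ^ (2 * \<rho>))\<^sup>2 = \<theta> ^ (4 * \<rho>)" by (simp add: power_mult[symmetric] mult.commute)
    then show ?thesis using theta_pow1 by simp
  qed
  then have "\<theta> ^ (2 * \<rho>) = 1 \<or> \<theta> ^ (2 * \<rho>) = -1" by (simp add: power2_eq_1_iff)
  moreover have "\<theta> ^ (2 * \<rho>) \<noteq> 1"
  proof
    assume "\<theta> ^ (2 * \<rho>) = 1"
    then have "4 * \<rho> dvd 2 * \<rho>" using theta_pow1 by simp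
    then have "4 * \<rho> \<le> 2 * \<rho>" using rho_ge5 by (simp add: dvd_imp_le)
    then show False using rho_ge5 by simp
  qed
  ultimately show ?thesis by simp
qed

definition "\<iota> = \<theta> ^ \<rho>"

lemma iota_sq: "\<iota> * \<iota> = -1"
  unfolding \<iota>_def using theta_2rho by (simp add: power_add[symmetric] mult_2)

lemma omega_rho: "(- (\<theta>^2)) ^ \<rho> = 1"
proof -
  have "(- (\<theta>^2)) ^ \<rho> = (-1) ^ \<rho> * (\<theta> ^ 2) ^ \<rho>" by (rule power_minus)
  also have "(-1::'a) ^ \<rho> = -1" using mp(2) by simp
  also have "(\<theta> ^ 2) ^ \<rho> = \<theta> ^ (2 * \<rho>)" by (simp add: power_mult)
  finally show ?thesis using theta_2rho by simp
qed

lemma omega_ne1: "- (\<theta>^2) \<noteq> 1"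
proof
  assume "- (\<theta>^2) = 1"
  then have "\<theta>^2 = -1" by (simp add: minus_equation_iff)
  then have "\<theta> ^ 4 = 1" by (metis power_mult numeral_Bit0 mult_2_right power2_eq_1_iff numeral_One one_add_one
      Num.numeral_times_numeral mult_2 power_one power_minus1_even even_numeral)
  then have "4 * \<rho> dvd 4" using theta_pow1 by simp
  then have "4 * \<rho> \<le> 4" by (simp add: dvd_imp_le)
  then show False using rho_ge5 by simp
qed

end

sublocale main_setup \<subseteq> omega_setup \<rho> "- (\<theta>^2)"
  by unfold_locales (rule omega_rho, rule omega_ne1, rule three0)

lemma sum_split_even_odd:
  fixes f :: "nat \<Rightarrow> 'b::comm_monoid_add"
  shows "(\<Sum>j<2*n. f j) = (\<Sum>j<n. f (2*j) + f (2*j+1))"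
proof (induction n)
  case 0 then show ?case by simp
next
  case (Suc n)
  have "{..<2 * Suc n} = insert (2*n+1) (insert (2*n) {..<2*n})" by auto
  then have "(\<Sum>j<2*Suc n. f j) = f (2*n+1) + (f (2*n) + (\<Sum>j<2*n. f j))" by simp
  then show ?case using Suc by (simp add: ac_simps)
qed

context main_setup
begin

lemma mdiv2: "m div 2 = h" using m_M by (simp add: h_def)
lemma m_2h: "m = 2 * h" using m_M M_h by simp

definition T :: "'a \<Rightarrow> 'a" where "T x = ftrace 9 (m div 2) x"
definition Tr :: "'a \<Rightarrow> 'a" where "Tr x = ftrace 3 m x"

lemma T_def2: "T x = (\<Sum>j<h. x ^ (3 ^ (2 * j)))"
  unfolding T_def ftrace_def mdiv2 by (simp add: power_mult)

lemma T_diff: "T (x - y) = T x - T y"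
  unfolding T_def2 by (simp add: frob3_diff[OF three0] sum_subtractf)

lemma T_neg: "T (- y) = - T y"
  unfolding T_def2 by (simp add: sum_negf)

lemma T_sign: "T ((-1) ^ i * y) = (-1) ^ i * T y"
  by (cases "even i") (simp_all add: T_neg)

lemma T_cc: "T (a * (- (\<theta>^2)) ^ i) = cc (\<lambda>j. a ^ (9 ^ j)) i"
  unfolding T_def T_def ftrace_def mdiv2 cc_def
  by (intro sum.cong refl) (simp add: power_mult_distrib power_mult[symmetric] mult.commute)

lemma fix9_pow: "(l::'a) ^ 9 = l \<Longrightarrow> l ^ (9 ^ j) = l"
proof (induction j)
  case (Suc j)
  have "(9::nat) ^ Suc j = 9 ^ j * 9" by simp
  then have "l ^ (9 ^ Suc j) = l ^ (9 ^ j * 9)" by (simp only:)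
  also have "\<dots> = (l ^ (9 ^ j)) ^ 9" by (rule power_mult)
  finally have "l ^ (9 ^ Suc j) = (l ^ (9 ^ j)) ^ 9" .
  then show ?case using Suc by simp
qed simp

lemma T_scal: "(l::'a) ^ 9 = l \<Longrightarrow> T (l * y) = l * T y"
  unfolding T_def ftrace_def mdiv2 by (simp add: power_mult_distrib fix9_pow sum_distrib_left)

lemma iota9: "\<iota> ^ 9 = \<iota>"
proof -
  have "\<iota> ^ 9 = (\<iota> * \<iota>) * (\<iota> * \<iota>) * (\<iota> * \<iota>) * (\<iota> * \<iota>) * \<iota>"
    by (simp add: power_Suc ac_simps numeral_eq_Suc)
  then show ?thesis using iota_sq by simp
qed

lemma Tr_T: "Tr x = T x + T x ^ 3"
proof -
  have "Tr x = (\<Sum>j<m. x ^ (3 ^ j))" unfolding Tr_def ftrace_def ..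
  also have "\<dots> = (\<Sum>j<2*h. x ^ (3 ^ j))" by (simp only: m_2h)
  also have "\<dots> = (\<Sum>j<h. x ^ (3 ^ (2*j)) + x ^ (3 ^ (2*j+1)))" by (rule sum_split_even_odd)
  also have "\<dots> = T x + (\<Sum>j<h. (x ^ (3 ^ (2*j))) ^ 3)"
  proof -
    have e: "x ^ (3 ^ (2*j+1)) = (x ^ (3 ^ (2*j))) ^ 3" for j
    proof -
      have "(3::nat) ^ (2*j+1) = 3 ^ (2*j) * 3" by simp
      then have "x ^ (3 ^ (2*j+1)) = x ^ (3 ^ (2*j) * 3)" by (simp only:)
      also have "\<dots> = (x ^ (3 ^ (2*j))) ^ 3" by (rule power_mult)
      finally show ?thesis .
    qed
    show ?thesis unfolding T_def2 e by (rule sum.distrib)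
  qed
  also have "(\<Sum>j<h. (x ^ (3 ^ (2*j))) ^ 3) = T x ^ 3"
    unfolding T_def2 using frob3_sum[OF three0, of "{..<h}" "\<lambda>j. x ^ (3 ^ (2*j))" 1] by simp
  finally show ?thesis .
qed

lemma Tr_diff: "Tr (x - y) = Tr x - Tr y"
  unfolding Tr_def ftrace_def by (simp add: frob3_diff[OF three0] sum_subtractf)

lemma Tr_zero_T: "T x = 0 \<Longrightarrow> Tr x = 0" using Tr_T by simp

lemma both_zero:
  assumes "Tr y = 0" "Tr (\<iota> * y) = 0" shows "T y = 0"
proof -
  define t where "t = T y"
  have a: "t + t ^ 3 = 0" using assms(1) Tr_T by (simp add: t_def)
  have "T (\<iota> * y) = \<iota> * t" using T_scal[OF iota9] by (simp add: t_def)
  then have "\<iota> * t + (\<iota> * t) ^ 3 = 0" using assms(2) Tr_T by simp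
  moreover have "(\<iota> * t) ^ 3 = - (\<iota> * t ^ 3)"
  proof -
    have "(\<iota> * t) ^ 3 = (\<iota> * \<iota>) * \<iota> * t ^ 3" by (simp add: power_mult_distrib power3_eq_cube)
    then show ?thesis using iota_sq by simp
  qed
  ultimately have "\<iota> * (t - t ^ 3) = 0" by (simp add: algebra_simps)
  moreover have "\<iota> \<noteq> 0" using iota_sq by auto
  ultimately have b: "t - t ^ 3 = 0" by simp
  from a b have "t + t = 0" by (simp add: algebra_simps)
  then have "2 * t = 0" by (simp only: mult_2)
  then show ?thesis using two_ne0 by (simp add: t_def)
qed

end

context main_setup
begin

definition cwC :: "'a \<Rightarrow> 'a list" where
  "cwC a = map (\<lambda>i. ftrace 3 m (a * \<theta> ^ i)) [0..<2 * \<rho>]"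
definition cwB :: "'a \<Rightarrow> 'a list" where
  "cwB a = map (\<lambda>i. ftrace 9 (m div 2) (a * \<theta> ^ (2 * i))) [0..<\<rho>]"

lemma theta_2i: "\<theta> ^ (2 * i) = (-1) ^ i * (- (\<theta>^2)) ^ i"
proof -
  have "(- (\<theta>^2)) ^ i = (-1) ^ i * (\<theta>^2) ^ i" by (rule power_minus)
  then have "(-1) ^ i * (- (\<theta>^2)) ^ i = ((-1) ^ i * (-1) ^ i) * (\<theta>^2) ^ i" by (simp add: ac_simps)
  also have "(-1::'a) ^ i * (-1) ^ i = 1" by (simp add: power_add[symmetric] power_mult_distrib[symmetric])
  finally show ?thesis by (simp add: power_mult)
qed

lemma hd_B: "hamming_dist (cwB a) (cwB a') = card {i\<in>{..<\<rho>}. cc (\<lambda>j. (a - a') ^ (9 ^ j)) i \<noteq> 0}"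
proof -
  have "{i. i < length (cwB a) \<and> cwB a ! i \<noteq> cwB a' ! i} = {i. i < \<rho> \<and> T (a * \<theta> ^ (2 * i)) \<noteq> T (a' * \<theta> ^ (2 * i))}"
    by (auto simp: cwB_def T_def)
  then have "hamming_dist (cwB a) (cwB a') = card {i. i < \<rho> \<and> T (a * \<theta> ^ (2 * i)) \<noteq> T (a' * \<theta> ^ (2 * i))}"
    unfolding hamming_dist_def by simp
  also have "{i. i < \<rho> \<and> T (a * \<theta> ^ (2 * i)) \<noteq> T (a' * \<theta> ^ (2 * i))} = {i\<in>{..<\<rho>}. cc (\<lambda>j. (a - a') ^ (9 ^ j)) i \<noteq> 0}"
  proof -
    have "T (a * \<theta> ^ (2 * i)) \<noteq> T (a' * \<theta> ^ (2 * i)) \<longleftrightarrow> cc (\<lambda>j. (a - a') ^ (9 ^ j)) i \<noteq> 0" for i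
    proof -
      have "T (a * \<theta> ^ (2 * i)) - T (a' * \<theta> ^ (2 * i)) = T ((a - a') * \<theta> ^ (2 * i))"
        by (simp add: T_diff[symmetric] algebra_simps)
      also have "\<dots> = (-1) ^ i * T ((a - a') * (- (\<theta>^2)) ^ i)"
        unfolding theta_2i by (simp add: T_sign[symmetric] ac_simps)
      also have "\<dots> = (-1) ^ i * cc (\<lambda>j. (a - a') ^ (9 ^ j)) i" by (simp add: T_cc)
      finally have "T (a * \<theta> ^ (2 * i)) - T (a' * \<theta> ^ (2 * i)) = (-1) ^ i * cc (\<lambda>j. (a - a') ^ (9 ^ j)) i" .
      moreover have "(-1::'a) ^ i \<noteq> 0" by simp
      moreover have "T (a * \<theta> ^ (2 * i)) \<noteq> T (a' * \<theta> ^ (2 * i)) \<longleftrightarrow> T (a * \<theta> ^ (2 * i)) - T (a' * \<theta> ^ (2 * i)) \<noteq> 0"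
        by simp
      ultimately show ?thesis by simp
    qed
    then show ?thesis by auto
  qed
  finally show ?thesis .
qed

lemma bound_B:
  assumes "cwB a \<noteq> cwB a'"
  shows "sqrt (real \<rho>) + 1 \<le> real (hamming_dist (cwB a) (cwB a'))"
proof -
  define b where "b j = (a - a') ^ (9 ^ j)" for j
  have "\<exists>i<\<rho>. cc b i \<noteq> 0"
  proof (rule ccontr)
    assume "\<not> (\<exists>i<\<rho>. cc b i \<noteq> 0)"
    then have "hamming_dist (cwB a) (cwB a') = 0" unfolding hd_B b_def[symmetric] by simp
    moreover have "length (cwB a) = length (cwB a')" by (simp add: cwB_def)
    ultimately have "cwB a = cwB a'"
      unfolding hamming_dist_def by (auto simp: list_eq_iff_nth_eq)
    then show False using assms by simp
  qed
  then obtain k0 where "k0 < \<rho>" "cc b k0 \<noteq> 0" by blast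
  then have bd: "\<rho> \<le> (card {i\<in>{..<\<rho>}. cc b i \<noteq> 0} - 1) ^ 2" by (rule sqrt_bound)
  define w where "w = card {i\<in>{..<\<rho>}. cc b i \<noteq> 0}"
  have hw: "hamming_dist (cwB a) (cwB a') = w" unfolding hd_B w_def b_def ..
  have bdw: "\<rho> \<le> (w - 1) ^ 2" using bd unfolding w_def .
  have w1: "w \<ge> 1"
  proof (rule ccontr)
    assume "\<not> w \<ge> 1" then have "w = 0" by simp
    then show False using bdw rho_ge5 by simp
  qed
  have "real \<rho> \<le> (real w - 1) ^ 2"
  proof -
    have "real \<rho> \<le> real ((w - 1) ^ 2)" using bdw by (simp only: of_nat_le_iff)
    also have "real ((w - 1) ^ 2) = (real w - 1) ^ 2" using w1 by (simp add: of_nat_diff)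
    finally show ?thesis .
  qed
  then have "sqrt (real \<rho>) \<le> sqrt ((real w - 1) ^ 2)" by (rule real_sqrt_le_mono)
  also have "\<dots> = real w - 1" using w1 by simp
  finally show ?thesis using hw by simp
qed

lemma cwC_nth: "i < 2 * \<rho> \<Longrightarrow> cwC a ! i = Tr (a * \<theta> ^ i)"
  by (simp add: cwC_def Tr_def)

lemma hd_C: "hamming_dist (cwC a) (cwC a') = card {i\<in>{..<2*\<rho>}. Tr ((a - a') * \<theta> ^ i) \<noteq> 0}"
proof -
  have "{i. i < length (cwC a) \<and> cwC a ! i \<noteq> cwC a' ! i} = {i. i < 2*\<rho> \<and> Tr (a * \<theta> ^ i) \<noteq> Tr (a' * \<theta> ^ i)}"
    by (auto simp: cwC_def Tr_def)
  then have "hamming_dist (cwC a) (cwC a') = card {i. i < 2*\<rho> \<and> Tr (a * \<theta> ^ i) \<noteq> Tr (a' * \<theta> ^ i)}"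
    unfolding hamming_dist_def by simp
  also have "{i. i < 2*\<rho> \<and> Tr (a * \<theta> ^ i) \<noteq> Tr (a' * \<theta> ^ i)} = {i\<in>{..<2*\<rho>}. Tr ((a - a') * \<theta> ^ i) \<noteq> 0}"
  proof -
    have D: "Tr (a * \<theta> ^ i) - Tr (a' * \<theta> ^ i) = Tr ((a - a') * \<theta> ^ i)" for i
      by (simp add: Tr_diff[symmetric] algebra_simps)
    have "Tr (a * \<theta> ^ i) \<noteq> Tr (a' * \<theta> ^ i) \<longleftrightarrow> Tr ((a - a') * \<theta> ^ i) \<noteq> 0" for i
    proof -
      have "Tr (a * \<theta> ^ i) \<noteq> Tr (a' * \<theta> ^ i) \<longleftrightarrow> Tr (a * \<theta> ^ i) - Tr (a' * \<theta> ^ i) \<noteq> 0" by simp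
      then show ?thesis by (simp only: D)
    qed
    then show ?thesis by auto
  qed
  finally show ?thesis .
qed

lemma theta_iota: "\<theta> ^ (i + \<rho>) = \<iota> * \<theta> ^ i"
  unfolding \<iota>_def by (simp add: power_add mult.commute)

lemma iota_nz: "\<iota> \<noteq> 0" using iota_sq by auto

lemma T_iota: "T (d * \<theta> ^ (i + \<rho>)) = \<iota> * T (d * \<theta> ^ i)"
proof -
  have e: "\<theta> ^ (i + \<rho>) = \<iota> * \<theta> ^ i" by (rule theta_iota)
  have "d * \<theta> ^ (i + \<rho>) = d * (\<iota> * \<theta> ^ i)" by (simp only: e)
  also have "\<dots> = \<iota> * (d * \<theta> ^ i)" by (rule mult.left_commute)
  finally have "d * \<theta> ^ (i + \<rho>) = \<iota> * (d * \<theta> ^ i)" .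
  then have "T (d * \<theta> ^ (i + \<rho>)) = T (\<iota> * (d * \<theta> ^ i))" by (simp only:)
  also have "\<dots> = \<iota> * T (d * \<theta> ^ i)" by (rule T_scal[OF iota9])
  finally show ?thesis .
qed

lemma Tr_iota: "d * \<theta> ^ (i + \<rho>) = \<iota> * (d * \<theta> ^ i)"
proof -
  have e: "\<theta> ^ (i + \<rho>) = \<iota> * \<theta> ^ i" by (rule theta_iota)
  have "d * \<theta> ^ (i + \<rho>) = d * (\<iota> * \<theta> ^ i)" by (simp only: e)
  also have "\<dots> = \<iota> * (d * \<theta> ^ i)" by (rule mult.left_commute)
  finally show ?thesis .
qed

lemma count_C_ge:
  "card {i\<in>{..<\<rho>}. T (d * \<theta> ^ i) \<noteq> 0} \<le> card {i\<in>{..<2*\<rho>}. Tr (d * \<theta> ^ i) \<noteq> 0}"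
proof (rule card_inj_on_le)
  define g where "g i = (if Tr (d * \<theta> ^ i) \<noteq> 0 then i else i + \<rho>)" for i
  show "inj_on g {i\<in>{..<\<rho>}. T (d * \<theta> ^ i) \<noteq> 0}"
  proof (rule inj_onI)
    fix x y assume xy: "x \<in> {i\<in>{..<\<rho>}. T (d * \<theta> ^ i) \<noteq> 0}" "y \<in> {i\<in>{..<\<rho>}. T (d * \<theta> ^ i) \<noteq> 0}" "g x = g y"
    have x: "x < \<rho>" using xy(1) by simp
    have y: "y < \<rho>" using xy(2) by simp
    have gx: "g x mod \<rho> = x" unfolding g_def using x by (cases "Tr (d * \<theta> ^ x) \<noteq> 0") simp_all
    have gy: "g y mod \<rho> = y" unfolding g_def using y by (cases "Tr (d * \<theta> ^ y) \<noteq> 0") simp_all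
    have "x = g x mod \<rho>" using gx by (rule sym)
    also have "\<dots> = g y mod \<rho>" using xy(3) by (rule arg_cong)
    also have "\<dots> = y" by (rule gy)
    finally show "x = y" .
  qed
  show "g ` {i\<in>{..<\<rho>}. T (d * \<theta> ^ i) \<noteq> 0} \<subseteq> {i\<in>{..<2*\<rho>}. Tr (d * \<theta> ^ i) \<noteq> 0}"
  proof
    fix y assume "y \<in> g ` {i\<in>{..<\<rho>}. T (d * \<theta> ^ i) \<noteq> 0}"
    then obtain x where x0: "x \<in> {i\<in>{..<\<rho>}. T (d * \<theta> ^ i) \<noteq> 0}" "y = g x" by (rule imageE)
    then have x: "x < \<rho>" "T (d * \<theta> ^ x) \<noteq> 0" "y = g x" by simp_all
    show "y \<in> {i\<in>{..<2*\<rho>}. Tr (d * \<theta> ^ i) \<noteq> 0}"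
    proof (cases "Tr (d * \<theta> ^ x) \<noteq> 0")
      case True then show ?thesis using x by (simp add: g_def)
    next
      case False
      have "Tr (d * \<theta> ^ (x + \<rho>)) \<noteq> 0"
      proof
        assume z: "Tr (d * \<theta> ^ (x + \<rho>)) = 0"
        have e: "d * \<theta> ^ (x + \<rho>) = \<iota> * (d * \<theta> ^ x)" by (rule Tr_iota)
        have "Tr (\<iota> * (d * \<theta> ^ x)) = Tr (d * \<theta> ^ (x + \<rho>))" by (simp only: e)
        then have "Tr (\<iota> * (d * \<theta> ^ x)) = 0" using z by simp
        then have "T (d * \<theta> ^ x) = 0" using both_zero False by simp
        then show False using x by simp
      qed
      then show ?thesis using x False by (simp add: g_def)
    qed
  qed
qed simp

lemma count_T_half:
  "card {i\<in>{..<\<rho>}. T (d * \<theta> ^ i) \<noteq> 0} = card {i\<in>{..<\<rho>}. T (d * \<theta> ^ (2 * i)) \<noteq> 0}"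
proof -
  define \<phi> where "\<phi> i = (if even i then i div 2 else (i + \<rho>) div 2)" for i
  have two_phi: "2 * \<phi> i = (if even i then i else i + \<rho>)" for i
  proof (cases "even i")
    case True then show ?thesis unfolding \<phi>_def by (simp add: even_two_times_div_two)
  next
    case False
    then have "even (i + \<rho>)" using mp(2) by simp
    then show ?thesis using False unfolding \<phi>_def by (simp add: even_two_times_div_two)
  qed
  have bij: "bij_betw \<phi> {..<\<rho>} {..<\<rho>}"
  proof (rule inj_self_bij)
    show "inj_on \<phi> {..<\<rho>}"
    proof (rule inj_onI)
      fix x y assume xy: "x \<in> {..<\<rho>}" "y \<in> {..<\<rho>}" "\<phi> x = \<phi> y"
      have e1: "(2 * \<phi> x) mod \<rho> = x" using xy(1) by (simp add: two_phi)
      have e2: "(2 * \<phi> y) mod \<rho> = y" using xy(2) by (simp add: two_phi)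
      have "x = (2 * \<phi> x) mod \<rho>" using e1 by (rule sym)
      also have "\<dots> = (2 * \<phi> y) mod \<rho>" using xy(3) by (rule arg_cong)
      also have "\<dots> = y" by (rule e2)
      finally show "x = y" .
    qed
    show "\<phi> ` {..<\<rho>} \<subseteq> {..<\<rho>}"
    proof
      fix y assume "y \<in> \<phi> ` {..<\<rho>}"
      then obtain i where i: "i \<in> {..<\<rho>}" "y = \<phi> i" by (rule imageE)
      have "2 * \<phi> i < 2 * \<rho>" using i(1) unfolding two_phi by simp
      then show "y \<in> {..<\<rho>}" using i(2) by simp
    qed
  qed simp
  have eqv: "T (d * \<theta> ^ (2 * \<phi> i)) \<noteq> 0 \<longleftrightarrow> T (d * \<theta> ^ i) \<noteq> 0" for i
  proof (cases "even i")
    case True then show ?thesis by (simp add: two_phi)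
  next
    case False then show ?thesis by (simp add: two_phi T_iota iota_nz)
  qed
  show ?thesis using card_bij_filter[OF bij, of "\<lambda>i. T (d * \<theta> ^ (2 * i)) \<noteq> 0"] eqv by simp
qed

lemma T_zero: "T 0 = 0"
proof -
  show ?thesis unfolding T_def2 by (intro sum.neutral ballI) (rule zero_power, simp)
qed

lemma hd_B0: "hamming_dist (cwB d) (cwB 0) = card {i\<in>{..<\<rho>}. T (d * \<theta> ^ (2 * i)) \<noteq> 0}"
proof -
  have "{i. i < length (cwB d) \<and> cwB d ! i \<noteq> cwB 0 ! i} = {i\<in>{..<\<rho>}. T (d * \<theta> ^ (2 * i)) \<noteq> 0}"
    by (auto simp: cwB_def T_def[symmetric] T_zero)
  then show ?thesis unfolding hamming_dist_def by simp
qed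

lemma C_vs_B:
  assumes "cwC a \<noteq> cwC a'"
  shows "cwB (a - a') \<noteq> cwB 0 \<and> hamming_dist (cwB (a - a')) (cwB 0) \<le> hamming_dist (cwC a) (cwC a')"
proof
  define d where "d = a - a'"
  show "hamming_dist (cwB (a - a')) (cwB 0) \<le> hamming_dist (cwC a) (cwC a')"
    unfolding hd_B0 hd_C d_def[symmetric] count_T_half[symmetric] by (rule count_C_ge)
  show "cwB (a - a') \<noteq> cwB 0"
  proof
    assume eq: "cwB (a - a') = cwB 0"
    have allT: "T (d * \<theta> ^ (2 * i)) = 0" if "i < \<rho>" for i
    proof -
      have "cwB (a - a') ! i = cwB 0 ! i" using eq by simp
      then show ?thesis using that by (simp add: cwB_def T_def[symmetric] d_def T_zero)
    qed
    have "card {i\<in>{..<\<rho>}. T (d * \<theta> ^ (2 * i)) \<noteq> 0} = 0" using allT by simp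
    then have "card {i\<in>{..<\<rho>}. T (d * \<theta> ^ i) \<noteq> 0} = 0" by (simp only: count_T_half)
    then have allT1: "T (d * \<theta> ^ i) = 0" if "i < \<rho>" for i using that by simp
    have trz: "Tr (d * \<theta> ^ i) = 0" if "i < 2 * \<rho>" for i
    proof (cases "i < \<rho>")
      case True then show ?thesis using allT1 Tr_zero_T by simp
    next
      case False
      define k where "k = i - \<rho>"
      have k: "i = k + \<rho>" "k < \<rho>" using that False by (simp_all add: k_def)
      then show ?thesis using allT1[of k] T_iota[of d k] Tr_zero_T by simp
    qed
    have eqs: "Tr (a * \<theta> ^ i) = Tr (a' * \<theta> ^ i)" if "i < 2 * \<rho>" for i
    proof -
      have "Tr (a * \<theta> ^ i) - Tr (a' * \<theta> ^ i) = Tr (d * \<theta> ^ i)"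
        by (simp add: Tr_diff[symmetric] d_def algebra_simps)
      then show ?thesis using trz[OF that] by simp
    qed
    have "cwC a = cwC a'"
      unfolding cwC_def Tr_def[symmetric] by (rule map_cong[OF refl]) (simp add: eqs)
    then show False using assms by simp
  qed
qed

end

context main_setup
begin

lemma z_inj_le:
  assumes jk: "j \<le> k" "k < m" and eq: "\<theta> ^ (3 ^ j) = \<theta> ^ (3 ^ k)"
  shows "j = k"
proof -
  have le: "(3::nat) ^ j \<le> 3 ^ k" using jk(1) by (rule power_increasing) simp
  have "\<theta> ^ (3 ^ k) = \<theta> ^ (3 ^ j) * \<theta> ^ (3 ^ k - 3 ^ j)"
    using le by (simp add: power_add[symmetric])
  then have "\<theta> ^ (3 ^ j) * \<theta> ^ (3 ^ k - 3 ^ j) = \<theta> ^ (3 ^ j) * 1" using eq by simp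
  moreover have "\<theta> ^ (3 ^ j) \<noteq> 0" using theta_nz by simp
  ultimately have "\<theta> ^ (3 ^ k - 3 ^ j) = 1" by (rule mult_left_cancel[THEN iffD1, rotated])
  then have "4 * \<rho> dvd 3 ^ k - 3 ^ j" using theta_pow1 by simp
  then have "\<rho> dvd 3 ^ k - 3 ^ j" by (rule dvd_mult_right)
  then have "3 ^ k mod \<rho> = 3 ^ j mod \<rho>" using mod_eq_dvd_iff_nat[OF le] by simp
  then have "[k = j] (mod M)" using pow3_cong_iff by (simp add: cong_def)
  then show ?thesis using jk m_M by (simp add: cong_def)
qed

lemma z_inj: "j < m \<Longrightarrow> k < m \<Longrightarrow> \<theta> ^ (3 ^ j) = \<theta> ^ (3 ^ k) \<Longrightarrow> j = k"
  using z_inj_le by (metis nat_le_linear)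

lemma Tr_expand: "Tr (d * \<theta> ^ i) = (\<Sum>j<m. d ^ (3 ^ j) * (\<theta> ^ (3 ^ j)) ^ i)"
  unfolding Tr_def ftrace_def
  by (intro sum.cong refl) (simp add: power_mult_distrib power_mult[symmetric] mult.commute)

lemma Tr_all_zero:
  assumes z: "\<And>i. i < 2 * \<rho> \<Longrightarrow> Tr (d * \<theta> ^ i) = 0"
  shows "d = 0"
proof -
  define z where "z j = \<theta> ^ (3 ^ j)" for j
  define p where "p = (\<Prod>k\<in>{1..<m}. [:- z k, 1:])"
  have degp: "degree p \<le> m - 1"
  proof -
    have "degree p \<le> sum (degree \<circ> (\<lambda>k. [:- z k, 1:])) {1..<m}"
      unfolding p_def by (rule degree_prod_sum_le) simp
    also have "\<dots> = m - 1" by simp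
    finally show ?thesis .
  qed
  have polyp: "poly p x = (\<Prod>k\<in>{1..<m}. x - z k)" for x
    unfolding p_def by (simp add: poly_prod)
  have "(\<Sum>j<m. d ^ (3 ^ j) * poly p (z j)) = (\<Sum>j<m. d ^ (3 ^ j) * (\<Sum>i\<le>degree p. coeff p i * z j ^ i))"
    by (simp add: poly_altdef)
  also have "\<dots> = (\<Sum>j<m. \<Sum>i\<le>degree p. coeff p i * (d ^ (3 ^ j) * z j ^ i))"
    by (simp add: sum_distrib_left ac_simps)
  also have "\<dots> = (\<Sum>i\<le>degree p. \<Sum>j<m. coeff p i * (d ^ (3 ^ j) * z j ^ i))"
    by (rule sum.swap)
  also have "\<dots> = (\<Sum>i\<le>degree p. coeff p i * Tr (d * \<theta> ^ i))"
    unfolding Tr_expand z_def by (simp add: sum_distrib_left)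
  also have "\<dots> = 0"
  proof (rule sum.neutral, rule ballI)
    fix i assume "i \<in> {..degree p}"
    then have "i \<le> degree p" by simp
    then have "i < 2 * \<rho>" using degp m_def rho_ge5 by linarith
    then show "coeff p i * Tr (d * \<theta> ^ i) = 0" using z by simp
  qed
  finally have S: "(\<Sum>j<m. d ^ (3 ^ j) * poly p (z j)) = 0" .
  have "(\<Sum>j<m. d ^ (3 ^ j) * poly p (z j)) = d * poly p (z 0)"
  proof -
    have "{..<m} = insert 0 {1..<m}" using M_ge4 m_M by auto
    moreover have "(\<Sum>j\<in>{1..<m}. d ^ (3 ^ j) * poly p (z j)) = 0"
    proof (rule sum.neutral, rule ballI)
      fix j assume j: "j \<in> {1..<m}"
      have "poly p (z j) = 0" unfolding polyp using j by (intro prod_zero) auto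
      then show "d ^ (3 ^ j) * poly p (z j) = 0" by simp
    qed
    ultimately show ?thesis by simp
  qed
  moreover have "poly p (z 0) \<noteq> 0"
  proof -
    have "z 0 - z k \<noteq> 0" if "k \<in> {1..<m}" for k
    proof
      assume "z 0 - z k = 0"
      then have "\<theta> ^ (3 ^ 0) = \<theta> ^ (3 ^ k)" by (simp add: z_def)
      then have "0 = k" using that by (intro z_inj) auto
      then show False using that by simp
    qed
    then show ?thesis unfolding polyp by (simp add: prod_zero_iff)
  qed
  ultimately show ?thesis using S by simp
qed

lemma cwC_inj: "inj cwC"
proof (rule injI)
  fix a a' assume eq: "cwC a = cwC a'"
  have "Tr ((a - a') * \<theta> ^ i) = 0" if "i < 2 * \<rho>" for i
  proof -
    have "cwC a ! i = cwC a' ! i" using eq by simp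
    then have "Tr (a * \<theta> ^ i) = Tr (a' * \<theta> ^ i)" using that by (simp add: cwC_nth)
    moreover have "Tr ((a - a') * \<theta> ^ i) = Tr (a * \<theta> ^ i - a' * \<theta> ^ i)" by (simp add: algebra_simps)
    moreover have "Tr (a * \<theta> ^ i - a' * \<theta> ^ i) = Tr (a * \<theta> ^ i) - Tr (a' * \<theta> ^ i)" by (rule Tr_diff)
    ultimately show ?thesis by simp
  qed
  then have "a - a' = 0" by (rule Tr_all_zero)
  then show "a = a'" by simp
qed

end

definition dset :: "'a list set \<Rightarrow> nat set" where
  "dset X = {hamming_dist c c' | c c'. c \<in> X \<and> c' \<in> X \<and> c \<noteq> c'}"

lemma dset_finite: "finite X \<Longrightarrow> finite (dset X)"
proof -
  assume "finite X"
  have "dset X \<subseteq> (\<lambda>(c, c'). hamming_dist c c') ` (X \<times> X)" unfolding dset_def by auto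
  moreover have "finite ((\<lambda>(c, c'). hamming_dist c c') ` (X \<times> X))" using \<open>finite X\<close> by simp
  ultimately show ?thesis by (rule finite_subset)
qed

lemma min_distance_dset: "min_distance X = Min (dset X)"
  unfolding min_distance_def dset_def ..

theorem theorem11:
  fixes \<rho> :: nat and \<alpha> :: "'a::{field,finite}"
    and m :: nat and \<beta> \<theta> :: 'a and C Cbar :: "'a list set"
  assumes "prime \<rho>" and "odd \<rho>"
    and "[\<rho> = 5] (mod 12) \<or> [\<rho> = 7] (mod 12)"
    and "ord \<rho> 3 = \<rho> - 1"
    and m_def: "m = \<rho> - 1"
    and "card (UNIV :: 'a set) = 3 ^ m"
    and "primitive_element \<alpha>"
    and \<beta>_def: "\<beta> = \<alpha> ^ ((3 ^ m - 1) div (4 * \<rho>))"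
    and \<theta>_def: "\<theta> = inverse \<beta>"
    and C_def: "C = {map (\<lambda>i. ftrace 3 m (a * \<theta> ^ i)) [0..<2 * \<rho>] | a. True}"
    and Cbar_def: "Cbar = {map (\<lambda>i. ftrace 9 (m div 2) (a * \<theta> ^ (2 * i))) [0..<\<rho>] | a. True}"
  shows "card C = 3 ^ (\<rho> - 1)
    \<and> min_distance C \<ge> min_distance Cbar
    \<and> real (min_distance Cbar) \<ge> sqrt (real \<rho>) + 1"
proof -
  have r3: "\<rho> \<noteq> 3"
  proof
    assume "\<rho> = 3"
    then show False using assms(3) by (simp add: cong_def)
  qed
  interpret main_setup \<rho> m \<alpha> \<beta> \<theta>
    by unfold_locales (use assms r3 in auto)
  have C_eq: "C = range cwC" unfolding C_def cwC_def by auto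
  have B_eq: "Cbar = range cwB" unfolding Cbar_def cwB_def by auto
  have cardC: "card C = 3 ^ (\<rho> - 1)"
  proof -
    have "card C = card (UNIV :: 'a set)" unfolding C_eq using cwC_inj by (simp add: card_image)
    then show ?thesis using assms(6) m_def by simp
  qed
  have finC: "finite (dset C)" unfolding C_eq by (rule dset_finite) simp
  have finB: "finite (dset Cbar)" unfolding B_eq by (rule dset_finite) simp
  have neC: "dset C \<noteq> {}"
  proof -
    have "cwC 1 \<noteq> cwC 0" using cwC_inj by (simp add: inj_eq)
    then have "hamming_dist (cwC 1) (cwC 0) \<in> dset C" unfolding dset_def C_eq by blast
    then show ?thesis by blast
  qed
  have dom: "\<exists>y\<in>dset Cbar. y \<le> x" if xC: "x \<in> dset C" for x
  proof -
    obtain c c' where cc: "x = hamming_dist c c'" "c \<in> C" "c' \<in> C" "c \<noteq> c'"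
      using xC unfolding dset_def by blast
    obtain a a' where aa: "c = cwC a" "c' = cwC a'" using cc C_eq by blast
    have "cwB (a - a') \<noteq> cwB 0 \<and> hamming_dist (cwB (a - a')) (cwB 0) \<le> hamming_dist (cwC a) (cwC a')"
      using C_vs_B cc aa by simp
    moreover have "cwB (a - a') \<in> Cbar" "cwB 0 \<in> Cbar" using B_eq by simp_all
    ultimately have "hamming_dist (cwB (a - a')) (cwB 0) \<in> dset Cbar"
      "hamming_dist (cwB (a - a')) (cwB 0) \<le> x" using cc aa unfolding dset_def by blast+
    then show ?thesis by blast
  qed
  have neB: "dset Cbar \<noteq> {}" using dom neC by blast
  have part2: "min_distance C \<ge> min_distance Cbar"
  proof -
    have "Min (dset C) \<in> dset C" using finC neC by (rule Min_in)
    then obtain y where "y \<in> dset Cbar" "y \<le> Min (dset C)" using dom by blast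
    moreover have "Min (dset Cbar) \<le> y" using finB \<open>y \<in> dset Cbar\<close> by (rule Min_le)
    ultimately show ?thesis unfolding min_distance_dset by simp
  qed
  have part3: "real (min_distance Cbar) \<ge> sqrt (real \<rho>) + 1"
  proof -
    have "Min (dset Cbar) \<in> dset Cbar" using finB neB by (rule Min_in)
    then obtain c c' where cc: "Min (dset Cbar) = hamming_dist c c'" "c \<in> Cbar" "c' \<in> Cbar" "c \<noteq> c'"
      unfolding dset_def by blast
    obtain a a' where aa: "c = cwB a" "c' = cwB a'" using cc B_eq by blast
    have "sqrt (real \<rho>) + 1 \<le> real (hamming_dist (cwB a) (cwB a'))"
      using cc aa by (intro bound_B) simp
    then show ?thesis unfolding min_distance_dset using cc aa by simp
  qed
  show ?thesis using cardC part2 part3 by simp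
qed

end
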